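(* Let $g(x)=1-(1-x^2)^4$ for $|x|\le1$ and $g(x)=1$ otherwise, and let $D=([0,+\infty[\times\{2\})\cup(\{0\}\times]0,2])$. Then there exists a unique map $\Delta:]0,+\infty[\times]0,+\infty[\to D$ such that for every $(t,x)$, writing $\Delta(t,x)=(q_o,p_o)$, one has $\mathcal{F}_q(t,q_o,p_o)=x$ and $\mathcal{F}_q(s,q_o,p_o)>0$ for all $s\in]0,t[$. Moreover: (1) $\Delta$ is continuous; (2) if $\Delta(t_o,x_o)=(0,p_o)$, $\Delta(t_o,x_o')=(0,p_o')$ and $0<x_o<x_o'<q^\sharp(t_o)$, then $p_o<p_o'$; (3) for all $x\in]0,+\infty[$, $\lim_{t\to0+}\Delta(t,x)=(x,2)$.
   Context: $\mathcal{F}(t,q_o,p_o)=(\mathcal{F}_q,\mathcal{F}_p)(t,q_o,p_o)=(q(t),p(t))$, where $(q,p)$ is the global solution of $\dot q=p$, $\dot p=-g'(q)$ with $(q(0),p(0))=(q_o,p_o)$. $q^\sharp(t)=\mathcal{F}_q(t,0,2)$. *)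

theory Defs
  imports "HOL-Analysis.Analysis"
begin

definition g :: "real \<Rightarrow> real" where
  "g x = (if \<bar>x\<bar> \<le> 1 then 1 - (1 - x^2)^4 else 1)"

text \<open>Global solution of q' = p, p' = -g'(q) with initial data (qo,po) at time 0,
  evaluated at time t (the solution is unique since g' is Lipschitz).\<close>
definition is_sol :: "real \<Rightarrow> real \<Rightarrow> (real \<Rightarrow> real) \<Rightarrow> (real \<Rightarrow> real) \<Rightarrow> bool" where
  "is_sol qo po q p \<longleftrightarrow> q 0 = qo \<and> p 0 = po \<and>
     (\<forall>s. (q has_real_derivative p s) (at s) \<and>
          (p has_real_derivative - deriv g (q s)) (at s))"

definition flow :: "real \<Rightarrow> real \<Rightarrow> real \<Rightarrow> real \<times> real" where
  "flow t qo po = (THE z. \<exists>q p. is_sol qo po q p \<and> z = (q t, p t))"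

definition flow_q :: "real \<Rightarrow> real \<Rightarrow> real \<Rightarrow> real" where
  "flow_q t qo po = fst (flow t qo po)"

definition qsharp :: "real \<Rightarrow> real" where
  "qsharp t = flow_q t 0 2"

definition Dset :: "(real \<times> real) set" where
  "Dset = ({0..} \<times> {2}) \<union> ({0} \<times> {0<..2})"

definition good_Delta :: "(real \<times> real \<Rightarrow> real \<times> real) \<Rightarrow> bool" where
  "good_Delta \<Delta> \<longleftrightarrow> (\<forall>t x. 0 < t \<and> 0 < x \<longrightarrow>
      \<Delta> (t, x) \<in> Dset \<and>
      flow_q t (fst (\<Delta> (t, x))) (snd (\<Delta> (t, x))) = x \<and>
      (\<forall>s\<in>{0<..<t}. flow_q s (fst (\<Delta> (t, x))) (snd (\<Delta> (t, x))) > 0))"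

end

theory Submission
  imports Defs
begin

definition dg :: "real \<Rightarrow> real" where
  "dg u = (if \<bar>u\<bar> \<le> 1 then 8*u*(1-u^2)^3 else 0)"

lemma h4_deriv: "((\<lambda>u::real. (max 0 u)^4) has_real_derivative 4*(max 0 u)^3) (at u)"
proof (cases "u = 0")
  case True
  have "((\<lambda>y. ((max 0 y)^4 - (max 0 0)^4) / (y - 0)) \<longlongrightarrow> (0::real)) (at 0)"
  proof (rule Lim_null_comparison[where g="\<lambda>y. \<bar>y\<bar>^3"])
    show "\<forall>\<^sub>F x in at 0. norm (((max 0 x)^4 - (max 0 0)^4) / (x - 0)) \<le> \<bar>x\<bar>^3"
    proof (rule always_eventually, rule allI)
      fix x :: real
      show "norm (((max 0 x)^4 - (max 0 0)^4) / (x - 0)) \<le> \<bar>x\<bar>^3"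
      proof (cases "x \<ge> 0")
        case True
        then show ?thesis by (cases "x = 0") (auto simp: power4_eq_xxxx power3_eq_cube)
      next
        case False
        then show ?thesis by auto
      qed
    qed
    show "((\<lambda>x. \<bar>x\<bar>^3) \<longlongrightarrow> 0) (at (0::real))"
      by (rule tendsto_eq_intros | simp)+
  qed
  then show ?thesis using True by (simp add: has_field_derivative_iff)
next
  case False
  show ?thesis
  proof (cases "u > 0")
    case True
    have ev: "\<forall>\<^sub>F y in nhds u. (max 0 y)^4 = y^4"
      using eventually_nhds_in_open[of "{0<..}" u] True by (auto elim!: eventually_mono)
    have "((\<lambda>y. y^4) has_real_derivative 4*u^3) (at u)"
      by (rule derivative_eq_intros refl | simp)+
    then show ?thesis using True
      by (subst DERIV_cong_ev[OF refl ev refl]) auto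
  next
    case F2: False
    then have neg: "u < 0" using False by auto
    have ev: "\<forall>\<^sub>F y in nhds u. (max 0 y)^4 = 0"
      using eventually_nhds_in_open[of "{..<0}" u] neg by (auto elim!: eventually_mono)
    show ?thesis using neg
      by (subst DERIV_cong_ev[OF refl ev refl]) auto
  qed
qed

lemma sq_gt1: "1 < \<bar>x::real\<bar> \<Longrightarrow> 1 < x^2"
proof -
  assume "1 < \<bar>x\<bar>"
  then have "1 < \<bar>x\<bar>^2" using one_less_power[of "\<bar>x\<bar>" 2] by linarith
  then show ?thesis by simp
qed

lemma g_alt: "g x = 1 - (max 0 (1 - x^2))^4"
  unfolding g_def using sq_gt1[of x] by (auto simp: abs_square_le_1 not_le)

lemma dg_alt: "dg x = 8 * x * (max 0 (1 - x^2))^3"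
  unfolding dg_def using sq_gt1[of x] by (auto simp: abs_square_le_1 not_le)

lemma g_deriv: "(g has_real_derivative dg x) (at x)"
proof -
  have "((\<lambda>x. 1 - (max 0 (1 - x^2))^4) has_real_derivative
        0 - 4*(max 0 (1-x^2))^3 * (0 - 2*x)) (at x)"
    by (rule derivative_eq_intros DERIV_chain2[OF h4_deriv] refl | simp)+
  then show ?thesis
    unfolding g_alt[abs_def] dg_alt by (simp add: algebra_simps)
qed

lemma deriv_g: "deriv g x = dg x"
  using g_deriv DERIV_imp_deriv by blast

definition P8 :: "real \<Rightarrow> real" where "P8 u = 8*u*(1-u^2)^3"

lemma P8_deriv: "(P8 has_real_derivative (8*(1-u^2)^3 - 48*u^2*(1-u^2)^2)) (at u)"
  unfolding P8_def
  by (rule derivative_eq_intros refl | simp)+ (simp add: algebra_simps power2_eq_square power3_eq_cube)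

lemma P8_dbound: assumes "(u::real) \<in> {-1..1}" shows "\<bar>8*(1-u^2)^3 - 48*u^2*(1-u^2)^2\<bar> \<le> 48"
proof -
  have v: "0 \<le> u^2" "u^2 \<le> 1" using assms by (auto simp: abs_square_le_1)
  define w where "w = 1 - u^2"
  have w: "0 \<le> w" "w \<le> 1" using v by (auto simp: w_def)
  have a: "0 \<le> w^3" "w^3 \<le> 1" using w by (auto simp: power_le_one)
  have b: "0 \<le> u^2*w^2" "u^2*w^2 \<le> 1" using w v by (auto simp: power_le_one mult_le_one)
  have "\<bar>8*w^3 - 48*(u^2*w^2)\<bar> \<le> 48" using a b by linarith
  then show ?thesis by (simp add: w_def mult.assoc)
qed

lemma P8_lip: assumes "a \<in> {-1..1}" "b \<in> {-1..1}" shows "\<bar>P8 a - P8 b\<bar> \<le> 48 * \<bar>a - b\<bar>"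
proof -
  have "norm (P8 a - P8 b) \<le> 48 * norm (a - b)"
    apply (rule field_differentiable_bound[where S="{-1..1}" and f'="\<lambda>u. 8*(1-u^2)^3 - 48*u^2*(1-u^2)^2"])
    using P8_deriv P8_dbound assms by (auto intro: has_field_derivative_at_within)
  then show ?thesis by simp
qed

lemma dg_clamp: "dg u = P8 (max (-1) (min 1 u))"
  unfolding dg_def P8_def by (auto simp: abs_if)

lemma dg_lip: "\<bar>dg a - dg b\<bar> \<le> 48 * \<bar>a - b\<bar>"
proof -
  have "\<bar>dg a - dg b\<bar> \<le> 48 * \<bar>max (-1) (min 1 a) - max (-1) (min 1 b)\<bar>"
    unfolding dg_clamp by (rule P8_lip) auto
  also have "\<dots> \<le> 48 * \<bar>a - b\<bar>" by (auto simp: abs_if)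
  finally show ?thesis .
qed

lemma dg_bound: "\<bar>dg u\<bar> \<le> 8"
proof (cases "\<bar>u\<bar> \<le> 1")
  case True
  have w: "0 \<le> 1 - u^2" "1 - u^2 \<le> 1" using True by (auto simp: abs_square_le_1)
  then have "(1-u^2)^3 \<le> 1" "0 \<le> (1-u^2)^3" by (auto simp: power_le_one)
  then have "\<bar>u\<bar> * (1-u^2)^3 \<le> 1" using True by (simp add: mult_le_one)
  then show ?thesis using True w unfolding dg_def by (simp add: abs_mult)
qed (simp add: dg_def)

lemma dg_cont: "continuous_on S dg"
  unfolding dg_alt[abs_def] by (intro continuous_intros)

lemma isCont_dg: "isCont dg x"
  using dg_cont[of UNIV] continuous_on_eq_continuous_at by blast

lemma dg0: "dg 0 = 0" by (simp add: dg_def)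

lemma dg_ratio: assumes "0 < a" "a \<le> b" shows "a * dg b \<le> b * dg a"
proof -
  have "a^2 \<le> b^2" using assms by (intro power_mono) auto
  then have "max 0 (1 - b^2) \<le> max 0 (1 - a^2)" by auto
  then have m: "(max 0 (1 - b^2))^3 \<le> (max 0 (1 - a^2))^3"
    by (intro power_mono) auto
  have "a * dg b = 8*a*b * (max 0 (1 - b^2))^3" by (simp add: dg_alt)
  also have "\<dots> \<le> 8*a*b * (max 0 (1 - a^2))^3"
    using m assms by (intro mult_left_mono) auto
  also have "\<dots> = b * dg a" by (simp add: dg_alt)
  finally show ?thesis .
qed

lemma g_nonneg: "0 \<le> g x"
  unfolding g_alt using power_le_one[of "max 0 (1 - x^2)" 4] by (auto simp: abs_square_le_1)

lemma g_le1: "g x \<le> 1" unfolding g_alt by simp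

lemma g0: "g 0 = 0" by (simp add: g_def)

lemma g_mono: assumes "0 \<le> a" "a \<le> b" shows "g a \<le> g b"
proof -
  have "a^2 \<le> b^2" using assms by (intro power_mono) auto
  then have "max 0 (1 - b^2) \<le> max 0 (1 - a^2)" by auto
  then have "(max 0 (1 - b^2))^4 \<le> (max 0 (1 - a^2))^4"
    by (intro power_mono) auto
  then show ?thesis unfolding g_alt by simp
qed

lemma g_lower: "min (x^2) 1 \<le> g x"
proof (cases "\<bar>x\<bar> \<le> 1")
  case True
  have w: "0 \<le> 1 - x^2" "1 - x^2 \<le> 1" using True by (auto simp: abs_square_le_1)
  have "(1-x^2)^4 \<le> (1-x^2)^1" using w by (intro power_decreasing) auto
  then show ?thesis using True unfolding g_def by auto
qed (simp add: g_def)

lemma continuous_on_dg_comp[continuous_intros]: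
  "continuous_on S f \<Longrightarrow> continuous_on S (\<lambda>x. dg (f x))"
  using continuous_on_compose2[OF dg_cont[of UNIV], of S f] by auto

fun pic :: "real \<Rightarrow> real \<Rightarrow> nat \<Rightarrow> real \<Rightarrow> real \<times> real" where
  "pic a b 0 t = (a, b)"
| "pic a b (Suc n) t = (a + integral {0..t} (\<lambda>s. snd (pic a b n s)),
                        b - integral {0..t} (\<lambda>s. dg (fst (pic a b n s))))"

lemma pic_fst: "fst (pic a b (Suc n) t) = a + integral {0..t} (\<lambda>s. snd (pic a b n s))"
  by simp
lemma pic_snd: "snd (pic a b (Suc n) t) = b - integral {0..t} (\<lambda>s. dg (fst (pic a b n s)))"
  by simp
lemma pic_0: "pic a b 0 t = (a, b)" by simp

lemma pic_cont: "continuous_on {0..T} (pic a b n)"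
proof (induction n arbitrary: T)
  case 0
  then show ?case by (simp add: continuous_on_const)
next
  case (Suc n)
  have c1: "continuous_on {0..T} (\<lambda>s. snd (pic a b n s))"
    using Suc by (intro continuous_intros)
  have c2: "continuous_on {0..T} (\<lambda>s. dg (fst (pic a b n s)))"
    using Suc by (intro continuous_intros)
  have i1: "continuous_on {0..T} (\<lambda>t. integral {0..t} (\<lambda>s. snd (pic a b n s)))"
    by (rule indefinite_integral_continuous_1[OF integrable_continuous_interval[OF c1]])
  have i2: "continuous_on {0..T} (\<lambda>t. integral {0..t} (\<lambda>s. dg (fst (pic a b n s))))"
    by (rule indefinite_integral_continuous_1[OF integrable_continuous_interval[OF c2]])
  show ?case
    unfolding pic.simps using i1 i2 by (intro continuous_intros)
qed

declare pic.simps[simp del]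

lemma pic_int_snd: "(\<lambda>s. snd (pic a b n s)) integrable_on {0..t}"
  by (intro integrable_continuous_interval continuous_intros pic_cont)

lemma pic_int_dg: "(\<lambda>s. dg (fst (pic a b n s))) integrable_on {0..t}"
  by (intro integrable_continuous_interval continuous_intros pic_cont)

lemma int_power_bound:
  fixes t C :: real
  assumes "0 \<le> t"
  shows "((\<lambda>s. 48 * C * (48 * s)^n / fact n) has_integral (C * (48 * t)^(Suc n) / fact (Suc n))) {0..t}"
proof -
  have "((\<lambda>s. 48 * C * (48 * s)^n / fact n) has_integral
        ((\<lambda>s. C * (48 * s)^(Suc n) / fact (Suc n)) t - (\<lambda>s. C * (48 * s)^(Suc n) / fact (Suc n)) 0)) {0..t}"
  proof (rule fundamental_theorem_of_calculus[OF assms])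
    fix x assume "x \<in> {0..t}"
    have D: "((\<lambda>s. C * (48 * s)^(Suc n) / fact (Suc n)) has_real_derivative
            C * (real (Suc n) * (48 * x)^n * 48) / fact (Suc n)) (at x)"
      by (rule derivative_eq_intros refl | simp)+
    have E: "C * (real (Suc n) * (48 * x)^n * 48) / fact (Suc n) = 48 * C * (48 * x)^n / fact n"
      by (simp add: fact_Suc field_simps del: of_nat_Suc)
    have "((\<lambda>s. C * (48 * s)^(Suc n) / fact (Suc n)) has_real_derivative
            48 * C * (48 * x)^n / fact n) (at x within {0..t})"
      using D unfolding E by (rule has_field_derivative_at_within)
    then show "((\<lambda>s. C * (48 * s)^(Suc n) / fact (Suc n)) has_vector_derivative
            48 * C * (48 * x)^n / fact n) (at x within {0..t})"
      by (simp only: has_real_derivative_iff_has_vector_derivative)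
  qed
  then show ?thesis by simp
qed

lemma pic_diff:
  assumes "0 \<le> t" "t \<le> T"
  shows "\<bar>fst (pic a b (Suc n) t) - fst (pic a b n t)\<bar> + \<bar>snd (pic a b (Suc n) t) - snd (pic a b n t)\<bar>
           \<le> (\<bar>b\<bar> + 8) * T * (48 * t)^n / fact n"
  using assms
proof (induction n arbitrary: t)
  case 0
  have "\<bar>t * b\<bar> + \<bar>t * dg a\<bar> \<le> T * \<bar>b\<bar> + T * 8"
    using 0 dg_bound[of a] by (intro add_mono) (auto simp: abs_mult intro: mult_mono)
  then show ?case using 0 by (simp add: algebra_simps pic.simps)
next
  case (Suc n)
  define C where "C = (\<bar>b\<bar> + 8) * T"
  let ?dq = "\<lambda>s. fst (pic a b (Suc n) s) - fst (pic a b n s)"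
  let ?dp = "\<lambda>s. snd (pic a b (Suc n) s) - snd (pic a b n s)"
  let ?dd = "\<lambda>s. dg (fst (pic a b (Suc n) s)) - dg (fst (pic a b n s))"
  have cq: "continuous_on {0..t} ?dq" by (intro continuous_intros pic_cont)
  have cp: "continuous_on {0..t} ?dp" by (intro continuous_intros pic_cont)
  have cd: "continuous_on {0..t} ?dd" by (intro continuous_intros pic_cont)
  have e1: "fst (pic a b (Suc (Suc n)) t) - fst (pic a b (Suc n) t) = integral {0..t} ?dp"
    by (simp only: pic_fst[of a b "Suc n" t] pic_fst[of a b n t]) (simp add: integral_diff pic_int_snd)
  have e2: "snd (pic a b (Suc (Suc n)) t) - snd (pic a b (Suc n) t) = - integral {0..t} ?dd"
    by (simp only: pic_snd[of a b "Suc n" t] pic_snd[of a b n t]) (simp add: integral_diff pic_int_dg)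
  have i1: "?dp integrable_on {0..t}" by (rule integrable_continuous_interval[OF cp])
  have i1a: "(\<lambda>s. \<bar>?dp s\<bar>) integrable_on {0..t}" by (intro integrable_continuous_interval continuous_intros cp)
  have i2: "?dd integrable_on {0..t}" by (rule integrable_continuous_interval[OF cd])
  have i2a: "(\<lambda>s. 48 * \<bar>?dq s\<bar>) integrable_on {0..t}" by (intro integrable_continuous_interval continuous_intros cq)
  have "norm (integral {0..t} ?dp) \<le> integral {0..t} (\<lambda>s. \<bar>?dp s\<bar>)"
    by (rule integral_norm_bound_integral[OF i1 i1a]) simp
  then have b1: "\<bar>integral {0..t} ?dp\<bar> \<le> integral {0..t} (\<lambda>s. \<bar>?dp s\<bar>)" by simp
  have "norm (integral {0..t} ?dd) \<le> integral {0..t} (\<lambda>s. 48 * \<bar>?dq s\<bar>)"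
    by (rule integral_norm_bound_integral[OF i2 i2a]) (simp add: dg_lip)
  then have b2: "\<bar>integral {0..t} ?dd\<bar> \<le> integral {0..t} (\<lambda>s. 48 * \<bar>?dq s\<bar>)" by simp
  have b3: "integral {0..t} (\<lambda>s. \<bar>?dp s\<bar>) + integral {0..t} (\<lambda>s. 48 * \<bar>?dq s\<bar>)
      = integral {0..t} (\<lambda>s. \<bar>?dp s\<bar> + 48 * \<bar>?dq s\<bar>)"
    by (rule integral_add[symmetric, OF i1a i2a])
  have b4: "integral {0..t} (\<lambda>s. \<bar>?dp s\<bar> + 48 * \<bar>?dq s\<bar>) \<le> integral {0..t} (\<lambda>s. 48 * C * (48 * s)^n / fact n)"
  proof (rule integral_le)
    show "(\<lambda>s. \<bar>?dp s\<bar> + 48 * \<bar>?dq s\<bar>) integrable_on {0..t}"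
      by (rule integrable_add[OF i1a i2a])
    show "(\<lambda>s. 48 * C * (48 * s)^n / fact n) integrable_on {0..t}"
      using int_power_bound[of t C n] Suc.prems by blast
    fix s assume s: "s \<in> {0..t}"
    have "\<bar>?dq s\<bar> + \<bar>?dp s\<bar> \<le> C * (48 * s)^n / fact n"
      using Suc.IH[of s] s Suc.prems unfolding C_def by auto
    then have X: "48 * (\<bar>?dq s\<bar> + \<bar>?dp s\<bar>) \<le> 48 * (C * (48 * s)^n / fact n)"
      by (rule mult_left_mono) simp
    have "\<bar>?dp s\<bar> + 48 * \<bar>?dq s\<bar> \<le> 48 * (\<bar>?dq s\<bar> + \<bar>?dp s\<bar>)" by simp
    also note X
    also have "48 * (C * (48 * s)^n / fact n) = 48 * C * (48 * s)^n / fact n" by simp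
    finally show "\<bar>?dp s\<bar> + 48 * \<bar>?dq s\<bar> \<le> 48 * C * (48 * s)^n / fact n" .
  qed
  have b5: "integral {0..t} (\<lambda>s. 48 * C * (48 * s)^n / fact n) = C * (48 * t)^(Suc n) / fact (Suc n)"
    using int_power_bound[of t C n] Suc.prems by blast
  have "\<bar>integral {0..t} ?dp\<bar> + \<bar>- integral {0..t} ?dd\<bar> \<le> C * (48 * t)^(Suc n) / fact (Suc n)"
    using b1 b2 b3 b4 b5 by linarith
  then show ?case
    unfolding e1 e2 C_def by simp
qed

definition picX :: "real \<Rightarrow> real \<Rightarrow> real \<Rightarrow> real \<times> real" where
  "picX a b t = (a, b) + (\<Sum>i. pic a b (Suc i) t - pic a b i t)"

lemma norm_pair_le: "norm (u - v :: real \<times> real) \<le> \<bar>fst u - fst v\<bar> + \<bar>snd u - snd v\<bar>"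
  unfolding norm_prod_def using sqrt_sum_squares_le_sum_abs[of "fst u - fst v" "snd u - snd v"] by simp

lemma pic_unif: "uniform_limit {0..T} (pic a b) (picX a b) sequentially"
proof -
  define M where "M i = (\<bar>b\<bar> + 8) * T * (inverse (fact i) * (48 * T)^i)" for i
  have sM: "summable M" unfolding M_def by (intro summable_mult summable_exp)
  have bd: "norm (pic a b (Suc i) t - pic a b i t) \<le> M i" if t: "t \<in> {0..T}" for i t
  proof -
    have "norm (pic a b (Suc i) t - pic a b i t) \<le>
        \<bar>fst (pic a b (Suc i) t) - fst (pic a b i t)\<bar> + \<bar>snd (pic a b (Suc i) t) - snd (pic a b i t)\<bar>"
      by (rule norm_pair_le)
    also have "\<dots> \<le> (\<bar>b\<bar> + 8) * T * (48 * t)^i / fact i"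
      using t by (intro pic_diff) auto
    also have "\<dots> \<le> (\<bar>b\<bar> + 8) * T * (48 * T)^i / fact i"
      using t by (intro divide_right_mono mult_left_mono power_mono) auto
    also have "\<dots> = M i" by (simp add: M_def field_simps)
    finally show ?thesis .
  qed
  have U: "uniform_limit {0..T} (\<lambda>n t. \<Sum>i<n. pic a b (Suc i) t - pic a b i t)
             (\<lambda>t. \<Sum>i. pic a b (Suc i) t - pic a b i t) sequentially"
    by (rule Weierstrass_m_test[OF bd sM])
  show ?thesis
  proof (rule uniform_limitI)
    fix e :: real assume "0 < e"
    from uniform_limitD[OF U this]
    show "\<forall>\<^sub>F n in sequentially. \<forall>x\<in>{0..T}. dist (pic a b n x) (picX a b x) < e"
    proof (rule eventually_mono)
      fix n assume H: "\<forall>x\<in>{0..T}. dist (\<Sum>i<n. pic a b (Suc i) x - pic a b i x) (\<Sum>i. pic a b (Suc i) x - pic a b i x) < e"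
      show "\<forall>x\<in>{0..T}. dist (pic a b n x) (picX a b x) < e"
      proof
        fix x assume x: "x \<in> {0..T}"
        have "pic a b n x = (a, b) + (\<Sum>i<n. pic a b (Suc i) x - pic a b i x)"
          by (subst sum_lessThan_telescope[where f="\<lambda>i. pic a b i x"]) (simp add: pic_0)
        then show "dist (pic a b n x) (picX a b x) < e"
          using H x unfolding picX_def by (simp add: dist_norm)
      qed
    qed
  qed
qed

lemma picX_cont: "continuous_on {0..T} (picX a b)"
  by (rule uniform_limit_theorem[OF _ pic_unif]) (auto intro: always_eventually pic_cont)

lemma uniform_limit_dg:
  assumes "uniform_limit S f l F"
  shows "uniform_limit S (\<lambda>n x. dg (fst (f n x))) (\<lambda>x. dg (fst (l x))) F"
proof (rule uniform_limitI)
  fix e :: real assume e: "0 < e"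
  from uniform_limitD[OF assms, of "e/48"] e
  have "\<forall>\<^sub>F n in F. \<forall>x\<in>S. dist (f n x) (l x) < e/48" by simp
  then show "\<forall>\<^sub>F n in F. \<forall>x\<in>S. dist (dg (fst (f n x))) (dg (fst (l x))) < e"
  proof (rule eventually_mono)
    fix n assume H: "\<forall>x\<in>S. dist (f n x) (l x) < e/48"
    show "\<forall>x\<in>S. dist (dg (fst (f n x))) (dg (fst (l x))) < e"
    proof
      fix x assume "x \<in> S"
      then have "dist (f n x) (l x) < e/48" using H by blast
      moreover have "dist (dg (fst (f n x))) (dg (fst (l x))) \<le> 48 * dist (fst (f n x)) (fst (l x))"
        using dg_lip by (simp add: dist_real_def)
      moreover have "dist (fst (f n x)) (fst (l x)) \<le> dist (f n x) (l x)" by (rule dist_fst_le)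
      ultimately show "dist (dg (fst (f n x))) (dg (fst (l x))) < e" by linarith
    qed
  qed
qed

lemma picX_eq:
  assumes "0 \<le> t"
  shows "fst (picX a b t) = a + integral {0..t} (\<lambda>s. snd (picX a b s))"
    and "snd (picX a b t) = b - integral {0..t} (\<lambda>s. dg (fst (picX a b s)))"
proof -
  have U: "uniform_limit {0..t} (pic a b) (picX a b) sequentially" by (rule pic_unif)
  have pt: "(\<lambda>n. pic a b (Suc n) t) \<longlonglongrightarrow> picX a b t"
    using tendsto_uniform_limitI[OF U, of t] assms LIMSEQ_Suc by auto
  have U1: "uniform_limit {0..t} (\<lambda>n s. snd (pic a b n s)) (\<lambda>s. snd (picX a b s)) sequentially"
    using U by (intro uniform_limit_intros)
  obtain I J where I: "\<And>n. ((\<lambda>s. snd (pic a b n s)) has_integral I n) {0..t}"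
    and J: "((\<lambda>s. snd (picX a b s)) has_integral J) {0..t}" and IJ: "I \<longlonglongrightarrow> J"
    by (rule uniform_limit_integral[OF U1]) (auto intro: continuous_intros pic_cont)
  have "(\<lambda>n. fst (pic a b (Suc n) t)) \<longlonglongrightarrow> a + J"
  proof -
    have II: "integral {0..t} (\<lambda>s. snd (pic a b n s)) = I n" for n using I[of n] by (rule integral_unique)
    show ?thesis unfolding pic_fst II using IJ by (intro tendsto_intros)
  qed
  moreover have "(\<lambda>n. fst (pic a b (Suc n) t)) \<longlonglongrightarrow> fst (picX a b t)"
    using pt by (intro tendsto_intros)
  ultimately show "fst (picX a b t) = a + integral {0..t} (\<lambda>s. snd (picX a b s))"
    using J integral_unique LIMSEQ_unique by metis
  have U2: "uniform_limit {0..t} (\<lambda>n s. dg (fst (pic a b n s))) (\<lambda>s. dg (fst (picX a b s))) sequentially"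
    using U by (rule uniform_limit_dg)
  obtain I2 J2 where I2: "\<And>n. ((\<lambda>s. dg (fst (pic a b n s))) has_integral I2 n) {0..t}"
    and J2: "((\<lambda>s. dg (fst (picX a b s))) has_integral J2) {0..t}" and IJ2: "I2 \<longlonglongrightarrow> J2"
    by (rule uniform_limit_integral[OF U2]) (auto intro!: continuous_on_dg_comp continuous_on_fst pic_cont)
  have "(\<lambda>n. snd (pic a b (Suc n) t)) \<longlonglongrightarrow> b - J2"
  proof -
    have II: "integral {0..t} (\<lambda>s. dg (fst (pic a b n s))) = I2 n" for n using I2[of n] by (rule integral_unique)
    show ?thesis unfolding pic_snd II using IJ2 by (intro tendsto_intros)
  qed
  moreover have "(\<lambda>n. snd (pic a b (Suc n) t)) \<longlonglongrightarrow> snd (picX a b t)"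
    using pt by (intro tendsto_intros)
  ultimately show "snd (picX a b t) = b - integral {0..t} (\<lambda>s. dg (fst (picX a b s)))"
    using J2 integral_unique LIMSEQ_unique by metis
qed

lemma picX_0: "picX a b 0 = (a, b)"
  using picX_eq[of 0 a b] by (simp add: prod_eq_iff)

lemma within_Icc_to_ge:
  assumes "0 \<le> t" shows "at t within {0..t+1} = at t within {0::real..}"
  by (rule at_within_nhd[where S="{..<t+1}"]) (use assms in auto)

lemma picX_deriv:
  assumes "0 \<le> t"
  shows "((\<lambda>s. fst (picX a b s)) has_real_derivative snd (picX a b t)) (at t within {0..})"
    and "((\<lambda>s. snd (picX a b s)) has_real_derivative - dg (fst (picX a b t))) (at t within {0..})"
proof -
  let ?T = "t + 1"
  have c1: "continuous_on {0..?T} (\<lambda>s. snd (picX a b s))" by (intro continuous_intros picX_cont)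
  have c2: "continuous_on {0..?T} (\<lambda>s. dg (fst (picX a b s)))" by (intro continuous_intros picX_cont)
  have d1: "((\<lambda>x. a + integral {0..x} (\<lambda>s. snd (picX a b s))) has_real_derivative snd (picX a b t)) (at t within {0..?T})"
    using DERIV_add[OF DERIV_const integral_has_real_derivative[OF c1]] assms by simp
  have "((\<lambda>s. fst (picX a b s)) has_real_derivative snd (picX a b t)) (at t within {0..?T})"
    by (rule has_field_derivative_transform_within[OF d1, where d=1]) (use assms picX_eq in auto)
  then show "((\<lambda>s. fst (picX a b s)) has_real_derivative snd (picX a b t)) (at t within {0..})"
    using within_Icc_to_ge[OF assms] by simp
  have d2: "((\<lambda>x. b - integral {0..x} (\<lambda>s. dg (fst (picX a b s)))) has_real_derivative - dg (fst (picX a b t))) (at t within {0..?T})"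
    using DERIV_diff[OF DERIV_const integral_has_real_derivative[OF c2]] assms by simp
  have "((\<lambda>s. snd (picX a b s)) has_real_derivative - dg (fst (picX a b t))) (at t within {0..?T})"
    by (rule has_field_derivative_transform_within[OF d2, where d=1]) (use assms picX_eq in auto)
  then show "((\<lambda>s. snd (picX a b s)) has_real_derivative - dg (fst (picX a b t))) (at t within {0..})"
    using within_Icc_to_ge[OF assms] by simp
qed

definition solq :: "real \<Rightarrow> real \<Rightarrow> real \<Rightarrow> real" where
  "solq a b t = (if 0 \<le> t then fst (picX a b t) else fst (picX a (-b) (-t)))"
definition solp :: "real \<Rightarrow> real \<Rightarrow> real \<Rightarrow> real" where
  "solp a b t = (if 0 \<le> t then snd (picX a b t) else - snd (picX a (-b) (-t)))"

definition sol' :: "(real \<Rightarrow> real) \<Rightarrow> (real \<Rightarrow> real) \<Rightarrow> bool" where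
  "sol' q p \<longleftrightarrow> (\<forall>s. (q has_real_derivative p s) (at s) \<and> (p has_real_derivative - dg (q s)) (at s))"

lemma is_sol_iff: "is_sol a b q p \<longleftrightarrow> q 0 = a \<and> p 0 = b \<and> sol' q p"
  unfolding is_sol_def sol'_def deriv_g by simp

lemma deriv_split:
  assumes "(f has_real_derivative D) (at x within {..x})" "(f has_real_derivative D) (at x within {x..})"
  shows "(f has_real_derivative D) (at x)"
proof -
  have "((\<lambda>y. (f y - f x) / (y - x)) \<longlongrightarrow> D) (at x within ({..x} \<union> {x..}))"
    using assms unfolding has_field_derivative_iff Lim_within_Un by auto
  moreover have "{..x} \<union> {x..} = UNIV" by auto
  ultimately show ?thesis unfolding has_field_derivative_iff by simp
qed

lemma at_ge_open: "0 < t \<Longrightarrow> at t within {0::real..} = at t"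
  by (rule at_within_nhd[where S="{0<..}"]) auto

lemma sol_deriv:
  "(solq a b has_real_derivative solp a b t) (at t) \<and> (solp a b has_real_derivative - dg (solq a b t)) (at t)"
proof (cases "0 < t")
  case True
  have d1: "((\<lambda>s. fst (picX a b s)) has_real_derivative snd (picX a b t)) (at t)"
    using picX_deriv(1)[of t a b] True at_ge_open[OF True] by simp
  have d2: "((\<lambda>s. snd (picX a b s)) has_real_derivative - dg (fst (picX a b t))) (at t)"
    using picX_deriv(2)[of t a b] True at_ge_open[OF True] by simp
  have E: "solp a b t = snd (picX a b t)" "solq a b t = fst (picX a b t)"
    using True by (auto simp: solq_def solp_def)
  show ?thesis
    unfolding E
  proof
    show "(solq a b has_real_derivative snd (picX a b t)) (at t)"
      by (rule has_field_derivative_transform_within_open[OF d1, where S="{0<..}"])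
         (use True in \<open>auto simp: solq_def solp_def\<close>)
    show "(solp a b has_real_derivative - dg (fst (picX a b t))) (at t)"
      by (rule has_field_derivative_transform_within_open[OF d2, where S="{0<..}"])
         (use True in \<open>auto simp: solq_def solp_def\<close>)
  qed
next
  case False
  note F = False
  show ?thesis
  proof (cases "t < 0")
    case True
    have mt: "0 < -t" using True by simp
    have d1: "((\<lambda>s. fst (picX a (-b) s)) has_real_derivative snd (picX a (-b) (-t))) (at (-t))"
      using picX_deriv(1)[of "-t" a "-b"] mt at_ge_open[OF mt] by simp
    have d2: "((\<lambda>s. snd (picX a (-b) s)) has_real_derivative - dg (fst (picX a (-b) (-t)))) (at (-t))"
      using picX_deriv(2)[of "-t" a "-b"] mt at_ge_open[OF mt] by simp
    have e1: "((\<lambda>s. fst (picX a (-b) (-s))) has_real_derivative snd (picX a (-b) (-t)) * (-1)) (at t)"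
      by (rule DERIV_chain2[where g="\<lambda>s. -s", OF d1]) (rule derivative_eq_intros refl | simp)+
    have e2: "((\<lambda>s. - snd (picX a (-b) (-s))) has_real_derivative - (- dg (fst (picX a (-b) (-t))) * (-1))) (at t)"
      by (rule DERIV_minus, rule DERIV_chain2[where g="\<lambda>s. -s", OF d2]) (rule derivative_eq_intros refl | simp)+
    have E: "solp a b t = snd (picX a (-b) (-t)) * (-1)"
        "- dg (solq a b t) = - (- dg (fst (picX a (-b) (-t))) * (-1))"
      using True by (auto simp: solq_def solp_def)
    show ?thesis
      unfolding E
    proof
      show "(solq a b has_real_derivative snd (picX a (-b) (-t)) * (-1)) (at t)"
        by (rule has_field_derivative_transform_within_open[OF e1, where S="{..<0}"])
           (use True in \<open>auto simp: solq_def solp_def\<close>)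
      show "(solp a b has_real_derivative - (- dg (fst (picX a (-b) (-t))) * (-1))) (at t)"
        by (rule has_field_derivative_transform_within_open[OF e2, where S="{..<0}"])
           (use True in \<open>auto simp: solq_def solp_def\<close>)
    qed
  next
    case False
    then have t0: "t = 0" using F by simp
    have r1: "((\<lambda>s. fst (picX a b s)) has_real_derivative b) (at 0 within {0..})"
      using picX_deriv(1)[of 0 a b] by (simp add: picX_0)
    have r2: "((\<lambda>s. snd (picX a b s)) has_real_derivative - dg a) (at 0 within {0..})"
      using picX_deriv(2)[of 0 a b] by (simp add: picX_0)
    have l1': "((\<lambda>s. fst (picX a (-b) s)) has_real_derivative -b) (at (uminus 0) within (uminus ` {..0}))"
      using picX_deriv(1)[of 0 a "-b"] by (simp add: picX_0 image_uminus_atMost)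
    have l2': "((\<lambda>s. snd (picX a (-b) s)) has_real_derivative - dg a) (at (uminus 0) within (uminus ` {..0}))"
      using picX_deriv(2)[of 0 a "-b"] by (simp add: picX_0 image_uminus_atMost)
    have um: "(uminus has_real_derivative -1) (at (0::real) within {..0})"
      by (rule derivative_eq_intros refl | simp)+
    have l1: "((\<lambda>s. fst (picX a (-b) (-s))) has_real_derivative b) (at 0 within {..0})"
      using DERIV_image_chain[OF l1' um] by (simp add: o_def)
    have l2: "((\<lambda>s. - snd (picX a (-b) (-s))) has_real_derivative - dg a) (at 0 within {..0})"
      using DERIV_minus[OF DERIV_image_chain[OF l2' um]] by (simp add: o_def)
    have q: "(solq a b has_real_derivative b) (at 0)"
    proof (rule deriv_split)
      show "(solq a b has_real_derivative b) (at 0 within {..0})"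
        by (rule has_field_derivative_transform_within[OF l1, where d=1]) (auto simp: solq_def picX_0)
      show "(solq a b has_real_derivative b) (at 0 within {0..})"
        by (rule has_field_derivative_transform_within[OF r1, where d=1]) (auto simp: solq_def)
    qed
    have p: "(solp a b has_real_derivative - dg a) (at 0)"
    proof (rule deriv_split)
      show "(solp a b has_real_derivative - dg a) (at 0 within {..0})"
        by (rule has_field_derivative_transform_within[OF l2, where d=1]) (auto simp: solp_def picX_0)
      show "(solp a b has_real_derivative - dg a) (at 0 within {0..})"
        by (rule has_field_derivative_transform_within[OF r2, where d=1]) (auto simp: solp_def)
    qed
    show ?thesis using q p t0 by (simp add: solq_def solp_def picX_0)
  qed
qed

lemma sol_sol': "sol' (solq a b) (solp a b)"
  unfolding sol'_def using sol_deriv by blast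

lemma sol_0: "solq a b 0 = a" "solp a b 0 = b"
  by (simp_all add: solq_def solp_def picX_0)

lemma key_ineq:
  fixes x y d :: real
  assumes "\<bar>d\<bar> \<le> 48 * \<bar>x\<bar>"
  shows "\<bar>2*x*y - 2*y*d\<bar> \<le> 49 * (x^2 + y^2)"
proof -
  define P where "P = \<bar>x\<bar>*\<bar>y\<bar>"
  have "0 \<le> (\<bar>x\<bar> - \<bar>y\<bar>)^2" by simp
  then have a0: "2*(\<bar>x\<bar>*\<bar>y\<bar>) \<le> \<bar>x\<bar>^2 + \<bar>y\<bar>^2" unfolding power2_diff by linarith
  have a: "2*P \<le> x^2 + y^2" using a0 by (simp add: P_def)
  have t: "\<bar>2*x*y - 2*y*d\<bar> \<le> \<bar>2*x*y\<bar> + \<bar>2*y*d\<bar>" by (rule abs_triangle_ineq4)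
  have t1: "\<bar>2*x*y\<bar> = 2*P" by (simp add: abs_mult P_def)
  have t2: "\<bar>d\<bar>*\<bar>y\<bar> \<le> (48*\<bar>x\<bar>)*\<bar>y\<bar>" by (rule mult_right_mono[OF assms]) simp
  have t3: "\<bar>2*y*d\<bar> = 2*(\<bar>d\<bar>*\<bar>y\<bar>)" by (simp add: abs_mult)
  have t4: "(48*\<bar>x\<bar>)*\<bar>y\<bar> = 48 * P" by (simp add: P_def)
  have "\<bar>2*x*y - 2*y*d\<bar> \<le> 98 * P" using t t1 t2 t3 t4 by linarith
  also have "\<dots> = 49 * (2 * P)" by simp
  also have "\<dots> \<le> 49 * (x^2 + y^2)" using a by (rule mult_left_mono) simp
  finally show ?thesis .
qed

lemma gronwall:
  assumes s1: "sol' q1 p1" and s2: "sol' q2 p2"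
  shows "(q1 t - q2 t)^2 + (p1 t - p2 t)^2 \<le> exp (49 * \<bar>t - t0\<bar>) * ((q1 t0 - q2 t0)^2 + (p1 t0 - p2 t0)^2)"
proof -
  define w where "w s = (q1 s - q2 s)^2 + (p1 s - p2 s)^2" for s
  define w' where "w' s = 2*(q1 s - q2 s)*(p1 s - p2 s) + 2*(p1 s - p2 s)*(- dg (q1 s) + dg (q2 s))" for s
  have wd: "(w has_real_derivative w' s) (at s)" for s
  proof -
    have "((\<lambda>s. (q1 s - q2 s)^2 + (p1 s - p2 s)^2) has_real_derivative
       2 * (q1 s - q2 s) ^ 1 * (p1 s - p2 s) + 2 * (p1 s - p2 s) ^ 1 * (- dg (q1 s) - - dg (q2 s))) (at s)"
      using s1 s2 unfolding sol'_def
      by (intro derivative_eq_intros) auto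
    then show ?thesis unfolding w_def w'_def by (simp add: algebra_simps)
  qed
  have wb: "\<bar>w' s\<bar> \<le> 49 * w s" for s
  proof -
    have "\<bar>dg (q1 s) - dg (q2 s)\<bar> \<le> 48 * \<bar>q1 s - q2 s\<bar>" by (rule dg_lip)
    from key_ineq[OF this, of "p1 s - p2 s"]
    have "\<bar>2*(q1 s - q2 s)*(p1 s - p2 s) - 2*(p1 s - p2 s)*(dg (q1 s) - dg (q2 s))\<bar> \<le> 49 * w s"
      unfolding w_def .
    moreover have "w' s = 2*(q1 s - q2 s)*(p1 s - p2 s) - 2*(p1 s - p2 s)*(dg (q1 s) - dg (q2 s))"
      unfolding w'_def by (simp add: algebra_simps)
    ultimately show ?thesis by simp
  qed
  show ?thesis
  proof (cases "t0 \<le> t")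
    case True
    define v where "v s = exp (-49 * s) * w s" for s
    have "v t \<le> v t0"
    proof (rule DERIV_nonpos_imp_nonincreasing[OF True])
      fix x assume "t0 \<le> x" "x \<le> t"
      have "(v has_real_derivative (exp (-49 * x) * (-49) * w x + exp (-49 * x) * w' x)) (at x)"
        unfolding v_def by (rule derivative_eq_intros wd refl | simp)+
      moreover have "exp (-49 * x) * (-49) * w x + exp (-49 * x) * w' x \<le> 0"
      proof -
        have "w' x - 49 * w x \<le> 0" using wb[of x] by linarith
        then have "exp (-49 * x) * (w' x - 49 * w x) \<le> 0" by (simp add: mult_nonneg_nonpos)
        then show ?thesis by (simp add: algebra_simps)
      qed
      ultimately show "\<exists>y. (v has_real_derivative y) (at x) \<and> y \<le> 0" by blast
    qed
    then have "exp (-49 * t) * w t \<le> exp (-49 * t0) * w t0" unfolding v_def .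
    then have "exp (49 * t) * (exp (-49 * t) * w t) \<le> exp (49 * t) * (exp (-49 * t0) * w t0)"
      by (intro mult_left_mono) auto
    then have "w t \<le> exp (49 * t) * exp (-49 * t0) * w t0"
      by (simp add: mult.assoc[symmetric] exp_add[symmetric])
    also have "exp (49 * t) * exp (-49 * t0) = exp (49 * \<bar>t - t0\<bar>)"
      using True by (simp add: exp_add[symmetric] algebra_simps)
    finally show ?thesis unfolding w_def .
  next
    case False
    then have ft: "t \<le> t0" by simp
    define v where "v s = exp (49 * s) * w s" for s
    have "v t \<le> v t0"
    proof (rule DERIV_nonneg_imp_nondecreasing[OF ft])
      fix x assume "t \<le> x" "x \<le> t0"
      have "(v has_real_derivative (exp (49 * x) * 49 * w x + exp (49 * x) * w' x)) (at x)"
        unfolding v_def by (rule derivative_eq_intros wd refl | simp)+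
      moreover have "exp (49 * x) * 49 * w x + exp (49 * x) * w' x \<ge> 0"
      proof -
        have "w' x + 49 * w x \<ge> 0" using wb[of x] by linarith
        then have "exp (49 * x) * (w' x + 49 * w x) \<ge> 0" by simp
        then show ?thesis by (simp add: algebra_simps)
      qed
      ultimately show "\<exists>y. (v has_real_derivative y) (at x) \<and> y \<ge> 0" by blast
    qed
    then have "exp (49 * t) * w t \<le> exp (49 * t0) * w t0" unfolding v_def .
    then have "exp (-49 * t) * (exp (49 * t) * w t) \<le> exp (-49 * t) * (exp (49 * t0) * w t0)"
      by (intro mult_left_mono) auto
    then have "w t \<le> exp (-49 * t) * exp (49 * t0) * w t0"
      by (simp add: mult.assoc[symmetric] exp_add[symmetric])
    also have "exp (-49 * t) * exp (49 * t0) = exp (49 * \<bar>t - t0\<bar>)"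
      using ft by (simp add: exp_add[symmetric] algebra_simps)
    finally show ?thesis unfolding w_def .
  qed
qed

lemma sol_eq_at:
  assumes "sol' q1 p1" "sol' q2 p2" "q1 t0 = q2 t0" "p1 t0 = p2 t0"
  shows "q1 t = q2 t \<and> p1 t = p2 t"
proof -
  have "(q1 t - q2 t)^2 + (p1 t - p2 t)^2 \<le> 0"
    using gronwall[OF assms(1,2), of t t0] assms(3,4) by simp
  moreover have "0 \<le> (q1 t - q2 t)^2" "0 \<le> (p1 t - p2 t)^2" by simp_all
  ultimately have "(q1 t - q2 t)^2 = 0" "(p1 t - p2 t)^2 = 0" by linarith+
  then show ?thesis by simp
qed

lemma flow_eq: "flow t a b = (solq a b t, solp a b t)"
  unfolding flow_def
proof (rule the_equality)
  show "\<exists>q p. is_sol a b q p \<and> (solq a b t, solp a b t) = (q t, p t)"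
    by (rule exI[of _ "solq a b"], rule exI[of _ "solp a b"]) (simp add: is_sol_iff sol_0 sol_sol')
  fix z assume "\<exists>q p. is_sol a b q p \<and> z = (q t, p t)"
  then obtain q p where "is_sol a b q p" "z = (q t, p t)" by blast
  then show "z = (solq a b t, solp a b t)"
    using sol_eq_at[OF _ sol_sol', of q p 0 a b t] by (auto simp: is_sol_iff sol_0)
qed

lemma flow_q_eq: "flow_q t a b = solq a b t"
  by (simp add: flow_q_def flow_eq)

lemma energy: "(solp a b t)^2 / 2 + g (solq a b t) = b^2 / 2 + g a"
proof -
  define E where "E s = (solp a b s)^2 / 2 + g (solq a b s)" for s
  have "(E has_real_derivative 0) (at s)" for s
  proof -
    have "(E has_real_derivative (2 * solp a b s ^ 1 * (- dg (solq a b s)) / 2 + dg (solq a b s) * solp a b s)) (at s)"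
      unfolding E_def
      by (rule derivative_eq_intros DERIV_chain2[OF g_deriv] sol_deriv[THEN conjunct1] sol_deriv[THEN conjunct2] refl | simp)+
    then show ?thesis by simp
  qed
  then have "E t = E 0" using DERIV_isconst_all by blast
  then show ?thesis unfolding E_def by (simp add: sol_0)
qed

lemma solq_isCont: "isCont (solq a b) t"
  using sol_deriv DERIV_isCont by blast

lemma solp_isCont: "isCont (solp a b) t"
  using sol_deriv DERIV_isCont by blast

lemma solq_cont_on: "continuous_on S (solq a b)"
  using solq_isCont continuous_at_imp_continuous_on by blast

lemma solp_cont_on: "continuous_on S (solp a b)"
  using solp_isCont continuous_at_imp_continuous_on by blast

definition Dp :: "real \<Rightarrow> real \<times> real" where
  "Dp c = (if c \<le> 2 then (0, c) else (c - 2, 2))"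

definition Q :: "real \<Rightarrow> real \<Rightarrow> real" where
  "Q s c = solq (fst (Dp c)) (snd (Dp c)) s"

definition Pm :: "real \<Rightarrow> real \<Rightarrow> real" where
  "Pm s c = solp (fst (Dp c)) (snd (Dp c)) s"

definition En :: "real \<Rightarrow> real" where
  "En c = (snd (Dp c))^2 / 2 + g (fst (Dp c))"

lemma Q_energy: "(Pm s c)^2 / 2 + g (Q s c) = En c"
  unfolding Q_def Pm_def En_def by (rule energy)

lemma Dp_dist: "(fst (Dp c) - fst (Dp c'))^2 + (snd (Dp c) - snd (Dp c'))^2 \<le> (c - c')^2"
proof -
  consider "c \<le> 2" "c' \<le> 2" | "c \<le> 2" "\<not> c' \<le> 2" | "\<not> c \<le> 2" "c' \<le> 2" | "\<not> c \<le> 2" "\<not> c' \<le> 2"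
    by blast
  then show ?thesis
  proof cases
    case 2
    have p: "0 \<le> (c' - 2) * (2 - c)" using 2 by simp
    have "(0 - (c' - 2))^2 + (c - 2)^2 \<le> (c - c')^2"
      using p by (simp add: power2_eq_square algebra_simps)
    then show ?thesis using 2 by (simp add: Dp_def)
  next
    case 3
    have p: "0 \<le> (c - 2) * (2 - c')" using 3 by simp
    have "(c - 2 - 0)^2 + (2 - c')^2 \<le> (c - c')^2"
      using p by (simp add: power2_eq_square algebra_simps)
    then show ?thesis using 3 by (simp add: Dp_def)
  qed (auto simp: Dp_def)
qed

lemma Dp_inj: "0 < c \<Longrightarrow> 0 < c' \<Longrightarrow> Dp c = Dp c' \<Longrightarrow> c = c'"
  unfolding Dp_def by (auto split: if_splits)

lemma Q_sq_lip: "(Q t c - Q t c')^2 \<le> exp (49 * \<bar>t\<bar>) * (c - c')^2"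
proof -
  have "(Q t c - Q t c')^2 + (Pm t c - Pm t c')^2 \<le>
        exp (49 * \<bar>t - 0\<bar>) * ((Q 0 c - Q 0 c')^2 + (Pm 0 c - Pm 0 c')^2)"
    unfolding Q_def Pm_def by (rule gronwall[OF sol_sol' sol_sol'])
  also have "(Q 0 c - Q 0 c')^2 + (Pm 0 c - Pm 0 c')^2 \<le> (c - c')^2"
    unfolding Q_def Pm_def sol_0 by (rule Dp_dist)
  finally have "(Q t c - Q t c')^2 + (Pm t c - Pm t c')^2 \<le> exp (49 * \<bar>t\<bar>) * (c - c')^2"
    by (simp add: mult_left_mono)
  moreover have "0 \<le> (Pm t c - Pm t c')^2" by simp
  ultimately show ?thesis by linarith
qed

lemma Q_lip: "\<bar>Q t c - Q t c'\<bar> \<le> exp (49 * \<bar>t\<bar>) * \<bar>c - c'\<bar>"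
proof -
  define E where "E = exp (49 * \<bar>t\<bar>)"
  have E1: "1 \<le> E" unfolding E_def by simp
  have "(Q t c - Q t c')^2 \<le> E * (c - c')^2" unfolding E_def by (rule Q_sq_lip)
  also have "\<dots> \<le> E * E * (c - c')^2" using E1 by (simp add: mult_right_mono)
  also have "\<dots> = (E * (c - c'))^2" by (simp add: power2_eq_square)
  finally have "\<bar>Q t c - Q t c'\<bar> \<le> \<bar>E * (c - c')\<bar>" by (simp add: abs_le_square_iff)
  then show ?thesis using E1 unfolding E_def[symmetric] by (simp add: abs_mult)
qed

lemma Q_cont_c: "continuous_on S (Q t)"
proof (rule lipschitz_on_continuous_on)
  show "lipschitz_on (exp (49 * \<bar>t\<bar>)) S (Q t)"
    unfolding lipschitz_on_def dist_real_def using Q_lip by auto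
qed

lemma Q_isCont_c: "isCont (Q t) c"
  using Q_cont_c[of UNIV t] continuous_on_eq_continuous_at by blast

lemma Q_isCont_t: "isCont (\<lambda>s. Q s c) s"
  unfolding Q_def by (rule solq_isCont)

lemma Q_cont_t: "continuous_on S (\<lambda>s. Q s c)"
  unfolding Q_def by (rule solq_cont_on)

lemma Q_deriv: "((\<lambda>s. Q s c) has_real_derivative Pm s c) (at s)"
  unfolding Q_def Pm_def using sol_deriv by blast

lemma Pm_deriv: "((\<lambda>s. Pm s c) has_real_derivative - dg (Q s c)) (at s)"
  unfolding Q_def Pm_def using sol_deriv by blast

lemma Q0: "Q 0 c = fst (Dp c)" "Pm 0 c = snd (Dp c)"
  unfolding Q_def Pm_def by (simp_all add: sol_0)

lemma En_mono: assumes "0 < c1" "c1 \<le> c2" shows "En c1 \<le> En c2"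
proof -
  consider "c2 \<le> 2" | "c1 \<le> 2" "\<not> c2 \<le> 2" | "\<not> c1 \<le> 2"
    by blast
  then show ?thesis
  proof cases
    case 1
    then have "c1^2 \<le> c2^2" using assms by (intro power_mono) auto
    then show ?thesis using 1 assms by (simp add: En_def Dp_def g0)
  next
    case 2
    have "c1^2 \<le> 2^2" using 2 assms by (intro power_mono) auto
    then show ?thesis using 2 assms g_nonneg[of "c2 - 2"] by (simp add: En_def Dp_def g0)
  next
    case 3
    then show ?thesis using assms g_mono[of "c1 - 2" "c2 - 2"] by (simp add: En_def Dp_def)
  qed
qed

lemma Pm_pos_big:
  assumes "2 \<le> c" "0 \<le> s"
  shows "0 < Pm s c"
proof (rule ccontr)
  assume "\<not> 0 < Pm s c"
  then have "Pm s c \<le> 0" by simp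
  moreover have "Pm 0 c = 2" using assms by (simp add: Q0 Dp_def)
  ultimately obtain r where r: "0 \<le> r" "r \<le> s" "Pm r c = 0"
    using IVT2[of "\<lambda>s. Pm s c" s 0 0] assms
    by (auto simp: Pm_def intro: solp_isCont)
  have "(Pm r c)^2 / 2 + g (Q r c) = En c" by (rule Q_energy)
  moreover have "2 \<le> En c" using assms g_nonneg[of "c - 2"] by (auto simp: En_def Dp_def)
  moreover have "g (Q r c) \<le> 1" by (rule g_le1)
  ultimately show False using r by simp
qed

lemma Q_big_mono:
  assumes "2 \<le> c" "0 \<le> s1" "s1 < s2"
  shows "Q s1 c < Q s2 c"
  by (rule DERIV_pos_imp_increasing[OF assms(3)])
     (use assms Pm_pos_big Q_deriv in \<open>force\<close>)

lemma Q_big_ge: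
  assumes "2 \<le> c" "0 < s"
  shows "c - 2 < Q s c"
proof -
  have "Q 0 c < Q s c" using Q_big_mono[OF assms(1) _ assms(2)] by simp
  then show ?thesis using assms by (cases "c = 2") (simp_all add: Q0 Dp_def)
qed

lemma Q_small_lower:
  assumes "0 < c" "c \<le> 2" "0 \<le> s"
  shows "c * s - 4 * s^2 \<le> Q s c"
proof -
  have P: "c - 8 * x \<le> Pm x c" if "0 \<le> x" for x
  proof -
    have "Pm 0 c + 8 * 0 \<le> Pm x c + 8 * x"
    proof (rule DERIV_nonneg_imp_nondecreasing[OF that])
      fix y
      have "((\<lambda>y. Pm y c + 8 * y) has_real_derivative - dg (Q y c) + 8 * 1) (at y)"
        by (rule derivative_eq_intros Pm_deriv refl | simp)+
      moreover have "0 \<le> - dg (Q y c) + 8 * 1" using dg_bound[of "Q y c"] by linarith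
      ultimately show "\<exists>d. ((\<lambda>y. Pm y c + 8 * y) has_real_derivative d) (at y) \<and> 0 \<le> d" by blast
    qed
    then show ?thesis using assms by (simp add: Q0 Dp_def)
  qed
  have "Q 0 c - (c * 0 - 4 * 0^2) \<le> Q s c - (c * s - 4 * s^2)"
  proof (rule DERIV_nonneg_imp_nondecreasing[OF assms(3)])
    fix y assume y: "0 \<le> y" "y \<le> s"
    have "((\<lambda>y. Q y c - (c * y - 4 * y^2)) has_real_derivative Pm y c - (c * 1 - 4 * (2 * y^1 * 1))) (at y)"
      by (rule derivative_eq_intros Q_deriv refl | simp)+
    moreover have "0 \<le> Pm y c - (c * 1 - 4 * (2 * y^1 * 1))" using P[OF y(1)] by simp
    ultimately show "\<exists>d. ((\<lambda>y. Q y c - (c * y - 4 * y^2)) has_real_derivative d) (at y) \<and> 0 \<le> d" by blast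
  qed
  then show ?thesis using assms by (simp add: Q0 Dp_def)
qed

lemma Q_small_pos:
  assumes "0 < c" "c \<le> 2" "0 < s" "s < c / 4"
  shows "0 < Q s c"
proof -
  have "0 < s * (c - 4 * s)" using assms by simp
  also have "\<dots> = c * s - 4 * s^2" by (simp add: power2_eq_square algebra_simps)
  also have "\<dots> \<le> Q s c" using Q_small_lower assms by simp
  finally show ?thesis .
qed

lemma Q_small_g: assumes "0 < c" "c \<le> 2" shows "g (Q s c) \<le> c^2 / 2"
proof -
  have "(Pm s c)^2 / 2 + g (Q s c) = c^2 / 2" using Q_energy[of s c] assms by (simp add: En_def Dp_def g0)
  moreover have "0 \<le> (Pm s c)^2 / 2" by simp
  ultimately show ?thesis by linarith
qed

lemma first_nonpos:
  fixes f :: "real \<Rightarrow> real"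
  assumes cont: "\<And>x. isCont f x" and ab: "a \<le> b" and fb: "f b \<le> 0"
  obtains s where "a \<le> s" "s \<le> b" "f s \<le> 0" "\<And>x. a \<le> x \<Longrightarrow> x < s \<Longrightarrow> 0 < f x"
proof -
  define S where "S = {x. a \<le> x \<and> x \<le> b \<and> f x \<le> 0}"
  have cf: "continuous_on UNIV f" using cont continuous_at_imp_continuous_on by blast
  have c3: "closed {x. f x \<le> 0}" by (rule closed_Collect_le[OF cf continuous_on_const])
  have "S = {a..b} \<inter> {x. f x \<le> 0}" unfolding S_def by auto
  then have cl: "closed S" using closed_Int[OF closed_atLeastAtMost c3] by simp
  have ne: "S \<noteq> {}" using ab fb unfolding S_def by auto
  have bd: "bdd_below S" unfolding S_def by (auto intro: bdd_belowI[of _ a])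
  have inS: "Inf S \<in> S" by (rule closed_contains_Inf[OF ne bd cl])
  show ?thesis
  proof (rule that[of "Inf S"])
    show "a \<le> Inf S" "Inf S \<le> b" "f (Inf S) \<le> 0" using inS unfolding S_def by auto
    fix x assume x: "a \<le> x" "x < Inf S"
    show "0 < f x"
    proof (rule ccontr)
      assume "\<not> 0 < f x"
      then have "x \<in> S" using x inS unfolding S_def by auto
      then have "Inf S \<le> x" using bd by (rule cInf_lower)
      then show False using x by simp
    qed
  qed
qed

lemma Q_eq_at:
  assumes "Q s c1 = Q s c2" "Pm s c1 = Pm s c2"
  shows "Q t c1 = Q t c2 \<and> Pm t c1 = Pm t c2"
proof -
  note R = sol_eq_at[OF sol_sol'[of "fst (Dp c1)" "snd (Dp c1)"] sol_sol'[of "fst (Dp c2)" "snd (Dp c2)"]]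
  have "solq (fst (Dp c1)) (snd (Dp c1)) s = solq (fst (Dp c2)) (snd (Dp c2)) s"
       "solp (fst (Dp c1)) (snd (Dp c1)) s = solp (fst (Dp c2)) (snd (Dp c2)) s"
    using assms unfolding Q_def Pm_def by auto
  from R[OF this] show ?thesis unfolding Q_def Pm_def .
qed

lemma mono_core_big:
  assumes t: "0 < t" and c: "0 < c1" "c1 < c2" "2 < c2"
  shows "Q t c1 < Q t c2"
proof (rule ccontr)
  assume "\<not> Q t c1 < Q t c2"
  define d where "d s = Q s c2 - Q s c1" for s
  have dc: "isCont d x" for x unfolding d_def by (intro continuous_intros Q_isCont_t)
  have dd: "(d has_real_derivative (Pm s c2 - Pm s c1)) (at s)" for s
    unfolding d_def by (intro derivative_intros Q_deriv)
  have d0: "0 < d 0" using c by (auto simp: d_def Q0 Dp_def)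
  have dt: "d t \<le> 0" using \<open>\<not> Q t c1 < Q t c2\<close> by (simp add: d_def)
  obtain s where s: "0 \<le> s" "s \<le> t" "d s \<le> 0" and pos: "\<And>x. 0 \<le> x \<Longrightarrow> x < s \<Longrightarrow> 0 < d x"
    using first_nonpos[of d 0 t, OF dc less_imp_le[OF t] dt] by blast
  have s0: "0 < s" using s d0 by (cases "s = 0") auto
  obtain r where r: "0 \<le> r" "r \<le> s" "d r = 0"
    using IVT2[of d s 0 0] s d0 dc by auto
  have "r = s" using pos[of r] r by fastforce
  then have ds: "d s = 0" using r by simp
  have pp: "Pm s c2 - Pm s c1 \<le> 0"
  proof (rule ccontr)
    assume "\<not> Pm s c2 - Pm s c1 \<le> 0"
    then obtain e where e: "0 < e" "\<And>h. 0 < h \<Longrightarrow> h < e \<Longrightarrow> d (s - h) < d s"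
      using DERIV_pos_inc_left[OF dd[of s]] by force
    define h where "h = min e s / 2"
    have "0 < h" "h < e" "h \<le> s" using e s0 by (auto simp: h_def)
    then have "d (s - h) < 0" using e ds by simp
    moreover have "0 < d (s - h)" using pos[of "s - h"] \<open>0 < h\<close> \<open>h \<le> s\<close> by simp
    ultimately show False by simp
  qed
  have qeq: "Q s c1 = Q s c2" using ds by (simp add: d_def)
  have p2: "0 < Pm s c2" using Pm_pos_big[of c2 s] c s by simp
  have "(Pm s c1)^2 / 2 + g (Q s c1) = En c1" "(Pm s c2)^2 / 2 + g (Q s c2) = En c2"
    by (rule Q_energy)+
  moreover have "En c1 \<le> En c2" using c by (intro En_mono) auto
  ultimately have sq: "(Pm s c1)^2 \<le> (Pm s c2)^2" using qeq by simp
  have "\<bar>Pm s c1\<bar> \<le> \<bar>Pm s c2\<bar>" using sq by (simp add: abs_le_square_iff)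
  moreover have "\<bar>Pm s c2\<bar> = Pm s c2" using p2 by simp
  moreover have "Pm s c1 \<le> \<bar>Pm s c1\<bar>" by simp
  ultimately have "Pm s c1 \<le> Pm s c2" by linarith
  then have peq: "Pm s c1 = Pm s c2" using pp by simp
  have "Q 0 c1 = Q 0 c2 \<and> Pm 0 c1 = Pm 0 c2" using Q_eq_at[OF qeq peq] .
  then have "Dp c1 = Dp c2" by (simp add: Q0 prod_eq_iff)
  then have "c1 = c2" using Dp_inj[of c1 c2] c by simp
  then show False using c by simp
qed

lemma mono_core_small:
  assumes t: "0 < t" and c: "0 < c1" "c1 < c2" "c2 \<le> 2"
    and adm: "\<And>s. 0 < s \<Longrightarrow> s \<le> t \<Longrightarrow> 0 < Q s c1"
  shows "Q t c1 < Q t c2"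
proof (rule ccontr)
  assume "\<not> Q t c1 < Q t c2"
  define d where "d s = Q s c2 - Q s c1" for s
  have dc: "isCont d x" for x unfolding d_def by (intro continuous_intros Q_isCont_t)
  have dd: "(d has_real_derivative (Pm s c2 - Pm s c1)) (at s)" for s
    unfolding d_def by (intro derivative_intros Q_deriv)
  have Dc1: "Dp c1 = (0, c1)" and Dc2: "Dp c2 = (0, c2)" using c by (auto simp: Dp_def)
  have d0: "d 0 = 0" by (simp add: d_def Q0 Dc1 Dc2)
  have dt: "d t \<le> 0" using \<open>\<not> Q t c1 < Q t c2\<close> by (simp add: d_def)
  obtain e where e: "0 < e" "\<And>h. 0 < h \<Longrightarrow> h < e \<Longrightarrow> d 0 < d (0 + h)"
    using DERIV_pos_inc_right[OF dd[of 0]] c by (force simp: Q0 Dc1 Dc2)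
  have small: "0 < d h" if "0 < h" "h < e" for h using e(2)[OF that] d0 by simp
  have te: "e \<le> t" using small[of t] t dt by force
  have e2: "e/2 \<le> t" using te e by simp
  obtain s where s: "e/2 \<le> s" "s \<le> t" "d s \<le> 0" and pos': "\<And>x. e/2 \<le> x \<Longrightarrow> x < s \<Longrightarrow> 0 < d x"
    using first_nonpos[of d "e/2" t, OF dc e2 dt] by blast
  have s0: "0 < s" using s e by simp
  have pos: "0 < d x" if "0 < x" "x < s" for x
    using pos'[of x] small[of x] that e by (cases "x < e/2") auto
  define W where "W x = Q x c1 * Pm x c2 - Q x c2 * Pm x c1" for x
  define W' where "W' x = Q x c2 * dg (Q x c1) - Q x c1 * dg (Q x c2)" for x
  have Wd: "(W has_real_derivative W' x) (at x)" for x
  proof -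
    have "(W has_real_derivative (Pm x c1 * Pm x c2 + Q x c1 * (- dg (Q x c2))
            - (Pm x c2 * Pm x c1 + Q x c2 * (- dg (Q x c1))))) (at x)"
      unfolding W_def by (rule derivative_eq_intros Q_deriv Pm_deriv refl)+ (simp add: algebra_simps)
    then show ?thesis by (simp add: W'_def algebra_simps)
  qed
  have W0: "W 0 = 0" by (simp add: W_def Q0 Dc1 Dc2)
  have W'pos: "0 \<le> W' z" if "0 < z" "z < s" for z
  proof -
    have "0 < Q z c1" using adm[of z] that s by simp
    moreover have "Q z c1 \<le> Q z c2" using pos[OF that] by (simp add: d_def)
    ultimately have "Q z c1 * dg (Q z c2) \<le> Q z c2 * dg (Q z c1)" by (rule dg_ratio)
    then show ?thesis by (simp add: W'_def)
  qed
  have Wpos: "0 \<le> W x" if xx: "0 < x" "x \<le> s" for x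
  proof -
    obtain z where z: "0 < z" "z < x" "W x - W 0 = (x - 0) * W' z"
      using MVT2[of 0 x W W'] Wd xx by auto
    have "0 \<le> (x - 0) * W' z" using W'pos[of z] z xx by simp
    then show ?thesis using z W0 by simp
  qed
  define r where "r x = Q x c2 / Q x c1" for x
  have q1pos: "0 < Q x c1" if "s/2 \<le> x" "x \<le> s" for x using adm[of x] that s s0 by simp
  have rd: "(r has_real_derivative W x / (Q x c1)^2) (at x)" if "s/2 \<le> x" "x \<le> s" for x
  proof -
    have nz: "Q x c1 \<noteq> 0" using q1pos[OF that] by simp
    have "(r has_real_derivative (Pm x c2 * Q x c1 - Q x c2 * Pm x c1) / (Q x c1 * Q x c1)) (at x)"
      unfolding r_def by (rule derivative_eq_intros Q_deriv refl nz)+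
    then show ?thesis by (simp add: W_def power2_eq_square algebra_simps)
  qed
  obtain z where z: "s/2 < z" "z < s" "r s - r (s/2) = (s - s/2) * (W z / (Q z c1)^2)"
    using MVT2[of "s/2" s r "\<lambda>x. W x / (Q x c1)^2"] rd s0 by auto
  have "0 \<le> W z / (Q z c1)^2" using Wpos[of z] z s0 by simp
  then have "0 \<le> (s - s/2) * (W z / (Q z c1)^2)" using s0 by (intro mult_nonneg_nonneg) auto
  then have "r (s/2) \<le> r s" using z(3) by linarith
  moreover have "1 < r (s/2)"
  proof -
    have "0 < Q (s/2) c1" using q1pos[of "s/2"] s0 by simp
    moreover have "Q (s/2) c1 < Q (s/2) c2" using pos[of "s/2"] s0 by (simp add: d_def)
    ultimately show ?thesis by (simp add: r_def)
  qed
  moreover have "r s \<le> 1"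
  proof -
    have "0 < Q s c1" using q1pos[of s] s0 by simp
    moreover have "Q s c2 \<le> Q s c1" using s by (simp add: d_def)
    ultimately show ?thesis by (simp add: r_def)
  qed
  ultimately show False by simp
qed

lemma mono_core:
  assumes t: "0 < t" and c: "0 < c1" "c1 < c2"
    and adm: "\<And>s. 0 < s \<Longrightarrow> s \<le> t \<Longrightarrow> 0 < Q s c1"
  shows "Q t c1 < Q t c2"
proof (cases "2 < c2")
  case True
  then show ?thesis using mono_core_big[OF t c] by simp
next
  case False
  then show ?thesis using mono_core_small[OF t c _ adm] by simp
qed

definition adm :: "real \<Rightarrow> real \<Rightarrow> bool" where
  "adm t c \<longleftrightarrow> (\<forall>s. 0 < s \<and> s < t \<longrightarrow> 0 < Q s c)"

lemma adm_up:
  assumes "adm t c1" "0 < c1" "c1 \<le> c2"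
  shows "adm t c2"
  unfolding adm_def
proof (intro allI impI)
  fix s assume s: "0 < s \<and> s < t"
  show "0 < Q s c2"
  proof (cases "c1 = c2")
    case True
    then show ?thesis using assms s unfolding adm_def by blast
  next
    case False
    then have lt: "c1 < c2" using assms by simp
    have "Q s c1 < Q s c2"
    proof (rule mono_core)
      show "0 < s" "0 < c1" "c1 < c2" using s assms lt by auto
      fix s' assume "0 < s'" "s' \<le> s"
      then show "0 < Q s' c1" using assms s unfolding adm_def by simp
    qed
    moreover have "0 < Q s c1" using assms s unfolding adm_def by blast
    ultimately show ?thesis by simp
  qed
qed

lemma mono_adm:
  assumes "0 < t" "adm t c1" "0 < Q t c1" "0 < c1" "c1 < c2"
  shows "Q t c1 < Q t c2"
proof (rule mono_core)
  show "0 < t" "0 < c1" "c1 < c2" using assms by auto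
  fix s assume s: "0 < s" "s \<le> t"
  show "0 < Q s c1"
  proof (cases "s = t")
    case True then show ?thesis using assms by simp
  next
    case False then show ?thesis using assms s unfolding adm_def by simp
  qed
qed

lemma adm_unique:
  assumes "0 < t" "0 < c1" "0 < c2" "adm t c1" "adm t c2" "Q t c1 = x" "Q t c2 = x" "0 < x"
  shows "c1 = c2"
proof (rule ccontr)
  assume "c1 \<noteq> c2"
  then consider "c1 < c2" | "c2 < c1" by linarith
  then show False
  proof cases
    case 1
    then have "Q t c1 < Q t c2" using assms by (intro mono_adm) auto
    then show False using assms by simp
  next
    case 2
    then have "Q t c2 < Q t c1" using assms by (intro mono_adm) auto
    then show False using assms by simp
  qed
qed

lemma adm_big: assumes "2 \<le> c" shows "adm t c"
  unfolding adm_def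
proof (intro allI impI)
  fix s assume "0 < s \<and> s < t"
  then have "c - 2 < Q s c" using Q_big_ge assms by simp
  then show "0 < Q s c" using assms by simp
qed

lemma Q_small_c:
  assumes x: "0 < x"
  shows "0 < min x 1 / 2" "min x 1 / 2 \<le> 2" "Q t (min x 1 / 2) < x"
proof -
  define c0 where "c0 = min x 1 / 2"
  have c0p: "0 < c0" using x by (simp add: c0_def)
  then show "0 < min x 1 / 2" by (simp add: c0_def)
  have c02: "c0 \<le> 2" by (simp add: c0_def)
  then show "min x 1 / 2 \<le> 2" by (simp add: c0_def)
  define m where "m = min x 1"
  have m: "0 < m" "m \<le> x" "m \<le> 1" using x by (auto simp: m_def)
  have c0m: "c0 = m / 2" by (simp add: c0_def m_def)
  have "Q t c0 < x"
  proof (rule ccontr)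
    assume "\<not> Q t c0 < x"
    then have qx: "x \<le> Q t c0" by simp
    have "m^2 \<le> x^2" using m by (intro power_mono) auto
    also have "x^2 \<le> (Q t c0)^2" using qx x by (intro power_mono) auto
    finally have "m^2 \<le> min ((Q t c0)^2) 1"
      using m power_le_one[of m 2] by simp
    also have "\<dots> \<le> g (Q t c0)" by (rule g_lower)
    also have "\<dots> \<le> c0^2 / 2" using Q_small_g c0p c02 by simp
    also have "\<dots> = m^2 / 8" by (simp add: c0m power2_eq_square)
    finally have "m^2 \<le> m^2 / 8" .
    then show False using m by simp
  qed
  then show "Q t (min x 1 / 2) < x" by (simp add: c0_def)
qed

lemma exists_c:
  assumes t: "0 < t" and x: "0 < x"
  shows "\<exists>c. 0 < c \<and> adm t c \<and> Q t c = x"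
proof -
  define C where "C = x + 2"
  have QC: "x \<le> Q t C" using Q_big_ge[of C t] t x by (simp add: C_def)
  have admC: "adm t C" by (rule adm_big) (simp add: C_def x less_imp_le)
  show ?thesis
  proof (cases "\<forall>c>0. adm t c")
    case True
    define c0 where "c0 = min x 1 / 2"
    have c0: "0 < c0" "c0 \<le> 2" "Q t c0 < x" using Q_small_c(1,2)[OF x] Q_small_c(3)[OF x, of t] by (simp_all add: c0_def)
    have "c0 \<le> C" using c0 x by (simp add: C_def)
    then obtain c where c: "c0 \<le> c" "c \<le> C" "Q t c = x"
      using IVT'[of "Q t" c0 x C] c0 QC Q_cont_c by auto
    then show ?thesis using True c0 by (intro exI[of _ c]) auto
  next
    case False
    then obtain c' where c': "0 < c'" "\<not> adm t c'" by blast
    define A where "A = {c. 0 < c \<and> adm t c}"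
    define c0 where "c0 = Inf A"
    have "C \<in> A" using admC x by (simp add: A_def C_def)
    then have Ane: "A \<noteq> {}" by blast
    have Abd: "bdd_below A" unfolding A_def by (rule bdd_belowI[of _ 0]) auto
    have lb: "c' < a" if "a \<in> A" for a
    proof (rule ccontr)
      assume "\<not> c' < a"
      then have "a \<le> c'" by simp
      then have "adm t c'" using adm_up[of t a c'] that unfolding A_def by blast
      then show False using c' by simp
    qed
    have c0ge: "c' \<le> c0" unfolding c0_def using Ane lb by (intro cInf_greatest) (auto intro: less_imp_le)
    have c0pos: "0 < c0" using c0ge c' by simp
    have 2: "2 \<in> A" unfolding A_def using adm_big[of 2 t] by simp
    have c0le2: "c0 \<le> 2" unfolding c0_def using cInf_lower[OF 2 Abd] .
    have near: "\<exists>a\<in>A. a < c0 + e" if "0 < e" for e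
    proof -
      have "Inf A < c0 + e" using that by (simp add: c0_def)
      then show ?thesis using cInf_less_iff[OF Ane Abd] by blast
    qed
    have above: "c0 \<le> a" if "a \<in> A" for a unfolding c0_def using cInf_lower[OF that Abd] .
    have nonneg: "0 \<le> Q s c0" if s: "0 < s" "s < t" for s
    proof (rule ccontr)
      assume "\<not> 0 \<le> Q s c0"
      then have neg: "Q s c0 < 0" by simp
      define E where "E = exp (49 * \<bar>s\<bar>)"
      have Ep: "0 < E" by (simp add: E_def)
      have ep: "0 < (- Q s c0) / E" using neg Ep by (intro divide_pos_pos) auto
      obtain a where a: "a \<in> A" "a < c0 + (- Q s c0) / E"
        using near[OF ep] by blast
      have "\<bar>Q s a - Q s c0\<bar> \<le> E * \<bar>a - c0\<bar>" unfolding E_def by (rule Q_lip)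
      also have "\<bar>a - c0\<bar> = a - c0" using above[OF a(1)] by simp
      also have "E * (a - c0) < E * ((- Q s c0) / E)"
        using a(2) Ep by (intro mult_strict_left_mono) auto
      also have "\<dots> = - Q s c0" using Ep by simp
      finally have "Q s a < 0" by linarith
      moreover have "0 < Q s a" using a(1) s unfolding A_def adm_def by blast
      ultimately show False by simp
    qed
    have admc0: "adm t c0"
      unfolding adm_def
    proof (intro allI impI)
      fix s assume s: "0 < s \<and> s < t"
      show "0 < Q s c0"
      proof (rule ccontr)
        assume "\<not> 0 < Q s c0"
        then have z: "Q s c0 = 0" using nonneg[of s] s by simp
        define dd where "dd = min s (t - s)"
        have dd: "0 < dd" using s by (simp add: dd_def)
        have "Pm s c0 = 0"
        proof (rule DERIV_local_min[OF Q_deriv dd])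
          show "\<forall>y. \<bar>s - y\<bar> < dd \<longrightarrow> Q s c0 \<le> Q y c0"
          proof (intro allI impI)
            fix y assume "\<bar>s - y\<bar> < dd"
            then have "0 < y" "y < t" using s by (auto simp: dd_def abs_if split: if_splits)
            then show "Q s c0 \<le> Q y c0" using nonneg[of y] z by simp
          qed
        qed
        then have "En c0 = 0" using Q_energy[of s c0] z by (simp add: g0)
        then have "c0^2 / 2 = 0" using c0le2 by (simp add: En_def Dp_def g0)
        then show False using c0pos by simp
      qed
    qed
    have Qc0: "Q t c0 \<le> 0"
    proof (rule ccontr)
      assume "\<not> Q t c0 \<le> 0"
      then have Qt: "0 < Q t c0" by simp
      have pos0: "0 < Q s c0" if "0 < s" "s \<le> t" for s
        using admc0 Qt that unfolding adm_def by (cases "s = t") auto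
      define s1 where "s1 = min t (c0 / 16)"
      have s1: "0 < s1" "s1 \<le> t" using t c0pos by (auto simp: s1_def)
      obtain sm where sm: "sm \<in> {s1..t}" "\<And>y. y \<in> {s1..t} \<Longrightarrow> Q sm c0 \<le> Q y c0"
        using continuous_attains_inf[of "{s1..t}" "\<lambda>s. Q s c0"] s1 Q_cont_t by auto
      define m where "m = Q sm c0"
      have mpos: "0 < m" unfolding m_def using pos0[of sm] sm s1 by auto
      define E where "E = exp (49 * t)"
      have Ep: "0 < E" by (simp add: E_def)
      define c where "c = c0 - min (c0 / 2) (m / E) / 2"
      have cpos: "c0 / 2 \<le> c" "c < c0" using c0pos mpos Ep by (auto simp: c_def)
      have cdist: "E * (c0 - c) < m"
      proof -
        have "c0 - c \<le> (m / E) / 2" by (simp add: c_def)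
        also have "\<dots> < m / E" using mpos Ep by (simp add: field_simps)
        finally show ?thesis using Ep by (simp add: field_simps)
      qed
      have "adm t c"
        unfolding adm_def
      proof (intro allI impI)
        fix s assume s: "0 < s \<and> s < t"
        show "0 < Q s c"
        proof (cases "s \<le> s1")
          case True
          have "s < c / 4" using True cpos c0pos unfolding s1_def by (simp add: min_le_iff_disj)
          then show ?thesis using Q_small_pos[of c s] cpos c0pos c0le2 s by simp
        next
          case False
          then have sin: "s \<in> {s1..t}" using s by simp
          have "\<bar>Q s c - Q s c0\<bar> \<le> exp (49 * \<bar>s\<bar>) * \<bar>c - c0\<bar>" by (rule Q_lip)
          also have "\<dots> \<le> E * \<bar>c - c0\<bar>" unfolding E_def using s by (intro mult_right_mono) auto
          also have "\<dots> = E * (c0 - c)" using cpos by simp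
          finally have "\<bar>Q s c - Q s c0\<bar> < m" using cdist by simp
          moreover have "m \<le> Q s c0" unfolding m_def using sm(2)[OF sin] .
          ultimately show ?thesis by linarith
        qed
      qed
      then have "c \<in> A" using cpos c0pos unfolding A_def by simp
      then have "c0 \<le> c" by (rule above)
      then show False using cpos by simp
    qed
    have "c0 \<le> C" using c0le2 x by (simp add: C_def)
    moreover have "Q t c0 \<le> x" using Qc0 x by simp
    ultimately obtain c where c: "c0 \<le> c" "c \<le> C" "Q t c = x"
      using IVT'[of "Q t" c0 x C] QC Q_cont_c by auto
    have "c \<noteq> c0" using c Qc0 x by auto
    then have "c0 < c" using c by simp
    then have "adm t c" using adm_up[OF admc0 c0pos] by simp
    then show ?thesis using c \<open>c0 < c\<close> c0pos by (intro exI[of _ c]) auto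
  qed
qed

definition Cf :: "real \<Rightarrow> real \<Rightarrow> real" where
  "Cf t x = (THE c. 0 < c \<and> adm t c \<and> Q t c = x)"

lemma Cf_eq:
  assumes "0 < t" "0 < x" "0 < c" "adm t c" "Q t c = x"
  shows "Cf t x = c"
  unfolding Cf_def
proof (rule the_equality)
  show "0 < c \<and> adm t c \<and> Q t c = x" using assms by simp
  fix c' assume "0 < c' \<and> adm t c' \<and> Q t c' = x"
  then show "c' = c" using adm_unique[of t c' c x] assms by simp
qed

lemma Cf:
  assumes "0 < t" "0 < x"
  shows "0 < Cf t x" "adm t (Cf t x)" "Q t (Cf t x) = x"
proof -
  obtain c where c: "0 < c" "adm t c" "Q t c = x" using exists_c[OF assms] by blast
  then have "Cf t x = c" using Cf_eq assms by simp
  then show "0 < Cf t x" "adm t (Cf t x)" "Q t (Cf t x) = x" using c by simp_all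
qed

definition Delta :: "real \<times> real \<Rightarrow> real \<times> real" where
  "Delta z = Dp (Cf (fst z) (snd z))"

lemma Dp_Dset: "0 < c \<Longrightarrow> Dp c \<in> Dset"
  unfolding Dp_def Dset_def by auto

lemma Dset_Dp: assumes "z \<in> Dset" shows "\<exists>c>0. z = Dp c"
proof -
  consider "snd z = 2" "0 \<le> fst z" | "fst z = 0" "0 < snd z" "snd z \<le> 2"
    using assms unfolding Dset_def by auto
  then show ?thesis
  proof cases
    case 1
    then have "z = Dp (fst z + 2)" unfolding Dp_def by (cases z) auto
    then show ?thesis using 1 by (intro exI[of _ "fst z + 2"]) auto
  next
    case 2
    then have "z = Dp (snd z)" unfolding Dp_def by (cases z) auto
    then show ?thesis using 2 by (intro exI[of _ "snd z"]) auto
  qed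
qed

lemma flowq_Dp: "flow_q s (fst (Dp c)) (snd (Dp c)) = Q s c"
  by (simp add: flow_q_eq Q_def)

lemma good: "good_Delta Delta"
  unfolding good_Delta_def
proof (intro allI impI conjI)
  fix t x :: real assume tx: "0 < t \<and> 0 < x"
  show "Delta (t, x) \<in> Dset" unfolding Delta_def using Cf(1) tx by (simp add: Dp_Dset)
  show "flow_q t (fst (Delta (t, x))) (snd (Delta (t, x))) = x"
    unfolding Delta_def flowq_Dp using Cf(3) tx by simp
  show "\<forall>s\<in>{0<..<t}. 0 < flow_q s (fst (Delta (t, x))) (snd (Delta (t, x)))"
    unfolding Delta_def flowq_Dp using Cf(2) tx unfolding adm_def by simp
qed

lemma uniq:
  assumes "good_Delta D'" "0 < t" "0 < x"
  shows "D' (t, x) = Delta (t, x)"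
proof -
  have G: "D' (t, x) \<in> Dset" "flow_q t (fst (D' (t, x))) (snd (D' (t, x))) = x"
     "\<forall>s\<in>{0<..<t}. 0 < flow_q s (fst (D' (t, x))) (snd (D' (t, x)))"
    using assms unfolding good_Delta_def by auto
  obtain c where c: "0 < c" "D' (t, x) = Dp c" using Dset_Dp[OF G(1)] by blast
  have "Q t c = x" using G(2) c by (simp add: flowq_Dp)
  moreover have "adm t c" using G(3) c unfolding adm_def by (simp add: flowq_Dp)
  ultimately have "Cf t x = c" using Cf_eq assms c by simp
  then show ?thesis using c by (simp add: Delta_def)
qed

lemma Dp_zero: assumes "0 < c" "Dp c = (0, p)" shows "c = p"
  using assms unfolding Dp_def by (auto split: if_splits)

lemma part2:
  assumes "0 < to" "Delta (to, xo) = (0, po)" "Delta (to, xo') = (0, po')"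
    "0 < xo" "xo < xo'"
  shows "po < po'"
proof -
  have c1: "0 < Cf to xo" "adm to (Cf to xo)" "Q to (Cf to xo) = xo" using Cf assms by auto
  have c2: "0 < Cf to xo'" "adm to (Cf to xo')" "Q to (Cf to xo') = xo'" using Cf assms by auto
  have p1: "Cf to xo = po" using Dp_zero[OF c1(1)] assms by (simp add: Delta_def)
  have p2: "Cf to xo' = po'" using Dp_zero[OF c2(1)] assms by (simp add: Delta_def)
  show ?thesis
  proof (rule ccontr)
    assume "\<not> po < po'"
    then consider "po' = po" | "po' < po" by linarith
    then show False
    proof cases
      case 1
      then show False using c1 c2 p1 p2 assms by simp
    next
      case 2
      have "Q to po' < Q to po"
        using mono_adm[of to po' po] c2 p2 assms 2 by simp
      then show False using c1 c2 p1 p2 assms by simp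
    qed
  qed
qed

lemma Dp_lip: "dist (Dp c) (Dp c') \<le> dist c c'"
proof -
  have "dist (Dp c) (Dp c') = sqrt ((fst (Dp c) - fst (Dp c'))^2 + (snd (Dp c) - snd (Dp c'))^2)"
    by (simp add: dist_norm norm_prod_def)
  also have "\<dots> \<le> sqrt ((c - c')^2)" by (rule real_sqrt_le_mono[OF Dp_dist])
  also have "\<dots> = dist c c'" by (simp add: dist_real_def)
  finally show ?thesis .
qed

lemma isCont_Dp: "isCont Dp c"
proof -
  have "continuous_on UNIV Dp"
    by (rule lipschitz_on_continuous_on[where L=1]) (simp add: lipschitz_on_def Dp_lip)
  then show ?thesis using continuous_on_eq_continuous_at by blast
qed

lemma ev_pos_near:
  assumes "0 < Q t0 a"
  obtains e where "0 < e" "\<And>s. \<bar>s - t0\<bar> < e \<Longrightarrow> 0 < Q s a"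
proof -
  have "((\<lambda>s. Q s a) \<longlongrightarrow> Q t0 a) (at t0)" using Q_isCont_t isCont_def by blast
  then have "\<forall>\<^sub>F s in at t0. 0 < Q s a" using assms by (rule order_tendstoD(1))
  then obtain e where e: "0 < e" "\<And>s. s \<noteq> t0 \<Longrightarrow> dist s t0 < e \<Longrightarrow> 0 < Q s a"
    unfolding eventually_at by auto
  show ?thesis
  proof (rule that[OF e(1)])
    fix s assume "\<bar>s - t0\<bar> < e"
    then show "0 < Q s a" using e(2)[of s] assms by (cases "s = t0") (auto simp: dist_real_def)
  qed
qed

lemma isCont_Cf:
  assumes t0: "0 < t0" and x0: "0 < x0"
  shows "isCont (\<lambda>z. Cf (fst z) (snd z)) (t0, x0)"
  unfolding isCont_def
proof (rule order_tendstoI)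
  let ?z0 = "(t0, x0)"
  define c0 where "c0 = Cf t0 x0"
  have C0: "0 < c0" "adm t0 c0" "Q t0 c0 = x0" using Cf[OF t0 x0] by (simp_all add: c0_def)
  have tf: "((\<lambda>z. fst z) \<longlongrightarrow> t0) (at ?z0)" by (rule tendsto_eq_intros refl | simp)+
  have tsn: "((\<lambda>z. snd z) \<longlongrightarrow> x0) (at ?z0)" by (rule tendsto_eq_intros refl | simp)+
  have tQ: "((\<lambda>z. Q (fst z) a) \<longlongrightarrow> Q t0 a) (at ?z0)" for a
    using isCont_tendsto_compose[OF Q_isCont_t tf] .
  have E1: "\<forall>\<^sub>F z in at ?z0. 0 < fst z" using order_tendstoD(1)[OF tf t0] .
  have E2: "\<forall>\<^sub>F z in at ?z0. 0 < snd z" using order_tendstoD(1)[OF tsn x0] .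
  {
    fix a assume a: "Cf (fst ?z0) (snd ?z0) < a"
    then have ac: "c0 < a" by (simp add: c0_def)
    have apos: "0 < a" using ac C0 by simp
    have admA: "adm t0 a" using adm_up[OF C0(2) C0(1)] ac by simp
    have Qa: "x0 < Q t0 a" using mono_adm[OF t0 C0(2) _ C0(1) ac] C0 x0 by simp
    obtain e where e: "0 < e" "\<And>s. \<bar>s - t0\<bar> < e \<Longrightarrow> 0 < Q s a"
      using ev_pos_near[of t0 a] Qa x0 by auto
    have E3: "\<forall>\<^sub>F z in at ?z0. snd z < Q (fst z) a"
    proof -
      have "((\<lambda>z. Q (fst z) a - snd z) \<longlongrightarrow> Q t0 a - x0) (at ?z0)" by (intro tendsto_diff tQ tsn)
      then have "\<forall>\<^sub>F z in at ?z0. 0 < Q (fst z) a - snd z" using Qa by (intro order_tendstoD(1)) auto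
      then show ?thesis by (rule eventually_mono) simp
    qed
    have E4: "\<forall>\<^sub>F z in at ?z0. fst z < t0 + e" using order_tendstoD(2)[OF tf] e by simp
    show "\<forall>\<^sub>F z in at ?z0. Cf (fst z) (snd z) < a"
      using E1 E2 E3 E4
    proof eventually_elim
      case (elim z)
      define t x where "t = fst z" and "x = snd z"
      have tx: "0 < t" "0 < x" "x < Q t a" "t < t0 + e" using elim by (simp_all add: t_def x_def)
      have admt: "adm t a"
        unfolding adm_def
      proof (intro allI impI)
        fix s assume s: "0 < s \<and> s < t"
        show "0 < Q s a"
        proof (cases "s < t0")
          case True then show ?thesis using admA s unfolding adm_def by blast
        next
          case False then show ?thesis using e(2)[of s] tx s by simp
        qed
      qed
      have c: "0 < Cf t x" "adm t (Cf t x)" "Q t (Cf t x) = x" using Cf tx by auto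
      show "Cf (fst z) (snd z) < a"
      proof (rule ccontr)
        assume "\<not> Cf (fst z) (snd z) < a"
        then have "a \<le> Cf t x" by (simp add: t_def x_def)
        then consider "a = Cf t x" | "a < Cf t x" by linarith
        then show False
        proof cases
          case 1 then show False using c tx by simp
        next
          case 2
          have "Q t a < Q t (Cf t x)" using mono_adm[OF tx(1) admt _ apos 2] tx by simp
          then show False using c tx by simp
        qed
      qed
    qed
  }
  {
    fix a assume a: "a < Cf (fst ?z0) (snd ?z0)"
    then have ac: "a < c0" by (simp add: c0_def)
    show "\<forall>\<^sub>F z in at ?z0. a < Cf (fst z) (snd z)"
    proof (cases "0 < a")
      case False
      show ?thesis using E1 E2
      proof eventually_elim
        case (elim z) then show ?case using Cf(1)[of "fst z" "snd z"] False by simp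
      qed
    next
      case apos: True
      show ?thesis
      proof (cases "adm t0 a")
        case True
        have Qa: "Q t0 a < x0"
        proof (cases "0 < Q t0 a")
          case True
          then show ?thesis using mono_adm[OF t0 \<open>adm t0 a\<close> True apos ac] C0 by simp
        next
          case False then show ?thesis using x0 by simp
        qed
        have E3: "\<forall>\<^sub>F z in at ?z0. Q (fst z) a < snd z"
        proof -
          have "((\<lambda>z. snd z - Q (fst z) a) \<longlongrightarrow> x0 - Q t0 a) (at ?z0)" by (intro tendsto_diff tQ tsn)
          then have "\<forall>\<^sub>F z in at ?z0. 0 < snd z - Q (fst z) a" using Qa by (intro order_tendstoD(1)) auto
          then show ?thesis by (rule eventually_mono) simp
        qed
        show ?thesis using E1 E2 E3
        proof eventually_elim
          case (elim z)
          define t x where "t = fst z" and "x = snd z"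
          have tx: "0 < t" "0 < x" "Q t a < x" using elim by (simp_all add: t_def x_def)
          have c: "0 < Cf t x" "adm t (Cf t x)" "Q t (Cf t x) = x" using Cf tx by auto
          show ?case
          proof (rule ccontr)
            assume "\<not> a < Cf (fst z) (snd z)"
            then have "Cf t x \<le> a" by (simp add: t_def x_def)
            then consider "Cf t x = a" | "Cf t x < a" by linarith
            then show False
            proof cases
              case 1 then show False using c tx by simp
            next
              case 2
              have "Q t (Cf t x) < Q t a" using mono_adm[OF tx(1) c(2) _ c(1) 2] c tx by simp
              then show False using c tx by simp
            qed
          qed
        qed
      next
        case False
        then obtain s0 where s0: "0 < s0" "s0 < t0" "\<not> 0 < Q s0 a" unfolding adm_def by blast
        have E5: "\<forall>\<^sub>F z in at ?z0. s0 < fst z" using order_tendstoD(1)[OF tf s0(2)] .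
        show ?thesis using E1 E2 E5
        proof eventually_elim
          case (elim z)
          define t x where "t = fst z" and "x = snd z"
          have tx: "0 < t" "0 < x" "s0 < t" using elim by (simp_all add: t_def x_def)
          have c: "0 < Cf t x" "adm t (Cf t x)" "Q t (Cf t x) = x" using Cf tx by auto
          show ?case
          proof (rule ccontr)
            assume "\<not> a < Cf (fst z) (snd z)"
            then have "Cf t x \<le> a" by (simp add: t_def x_def)
            then have "adm t a" using adm_up[OF c(2) c(1)] by simp
            then show False using s0 tx unfolding adm_def by blast
          qed
        qed
      qed
    qed
  }
qed

lemma cont_Delta: "continuous_on ({0<..} \<times> {0<..}) Delta"
proof -
  have "isCont Delta z" if "z \<in> {0<..} \<times> {0<..}" for z
  proof -
    obtain t0 x0 where z0: "z = (t0, x0)" by (cases z)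
    then have z: "z = (t0, x0)" "0 < t0" "0 < x0" using that by auto
    have "isCont (Dp \<circ> (\<lambda>z. Cf (fst z) (snd z))) z"
      unfolding z(1) by (rule continuous_at_compose[OF isCont_Cf[OF z(2,3)] isCont_Dp])
    then show ?thesis by (simp add: Delta_def[abs_def] o_def)
  qed
  then show ?thesis by (intro continuous_at_imp_continuous_on) auto
qed

lemma lim_Delta:
  assumes x: "0 < x"
  shows "((\<lambda>t. Delta (t, x)) \<longlongrightarrow> (x, 2)) (at_right 0)"
proof -
  have tQ: "((\<lambda>t. Q t b) \<longlongrightarrow> Q 0 b) (at_right 0)" for b
  proof -
    have "((\<lambda>t. Q t b) \<longlongrightarrow> Q 0 b) (at 0)" using Q_isCont_t isCont_def by blast
    then show ?thesis by (rule tendsto_mono[OF at_le[OF subset_UNIV]])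
  qed
  have Q0b: "Q 0 b = b - 2" if "2 \<le> b" for b using that by (cases "b = 2") (simp_all add: Q0 Dp_def)
  have E1: "\<forall>\<^sub>F t in at_right 0. 0 < (t::real)" using eventually_at_right_less[of "0::real"] by simp
  have lim: "((\<lambda>t. Cf t x) \<longlongrightarrow> x + 2) (at_right 0)"
  proof (rule order_tendstoI)
    fix a assume a: "x + 2 < a"
    have a2: "2 \<le> a" "0 < a" using a x by auto
    have "\<forall>\<^sub>F t in at_right 0. x < Q t a"
      using order_tendstoD(1)[OF tQ[of a]] Q0b[OF a2(1)] a by simp
    then show "\<forall>\<^sub>F t in at_right 0. Cf t x < a" using E1
    proof eventually_elim
      case (elim t)
      have c: "0 < Cf t x" "adm t (Cf t x)" "Q t (Cf t x) = x" using Cf elim x by auto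
      have admt: "adm t a" using adm_big a2 by simp
      show ?case
      proof (rule ccontr)
        assume "\<not> Cf t x < a"
        then consider "a = Cf t x" | "a < Cf t x" by linarith
        then show False
        proof cases
          case 1 then show False using c elim by simp
        next
          case 2
          have "Q t a < Q t (Cf t x)" using mono_adm[OF _ admt _ a2(2) 2] c elim x by simp
          then show False using c elim by simp
        qed
      qed
    qed
  next
    fix a assume a: "a < x + 2"
    define b where "b = max a (2 + x / 2)"
    have b: "2 < b" "b < x + 2" "a \<le> b" using a x by (auto simp: b_def)
    have "\<forall>\<^sub>F t in at_right 0. Q t b < x"
      using order_tendstoD(2)[OF tQ[of b]] Q0b[of b] b by simp
    then show "\<forall>\<^sub>F t in at_right 0. a < Cf t x" using E1
    proof eventually_elim
      case (elim t)
      have c: "0 < Cf t x" "adm t (Cf t x)" "Q t (Cf t x) = x" using Cf elim x by auto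
      have "b < Cf t x"
      proof (rule ccontr)
        assume "\<not> b < Cf t x"
        then consider "Cf t x = b" | "Cf t x < b" by linarith
        then show False
        proof cases
          case 1 then show False using c elim by simp
        next
          case 2
          have "Q t (Cf t x) < Q t b" using mono_adm[OF _ c(2) _ c(1) 2] c elim x by simp
          then show False using c elim by simp
        qed
      qed
      then show ?case using b by simp
    qed
  qed
  have "((\<lambda>t. Dp (Cf t x)) \<longlongrightarrow> Dp (x + 2)) (at_right 0)"
    by (rule isCont_tendsto_compose[OF isCont_Dp lim])
  moreover have "Dp (x + 2) = (x, 2)" using x by (simp add: Dp_def)
  ultimately show ?thesis by (simp add: Delta_def)
qed

theorem lemma5p16:
  shows "\<exists>\<Delta>. good_Delta \<Delta>
     \<and> (\<forall>\<Delta>'. good_Delta \<Delta>' \<longrightarrow> (\<forall>t x. 0 < t \<and> 0 < x \<longrightarrow> \<Delta>' (t, x) = \<Delta> (t, x)))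
     \<and> continuous_on ({0<..} \<times> {0<..}) \<Delta>
     \<and> (\<forall>to xo xo' po po'. 0 < to \<and> \<Delta> (to, xo) = (0, po) \<and> \<Delta> (to, xo') = (0, po')
            \<and> 0 < xo \<and> xo < xo' \<and> xo' < qsharp to \<longrightarrow> po < po')
     \<and> (\<forall>x>0. ((\<lambda>t. \<Delta> (t, x)) \<longlongrightarrow> (x, 2)) (at_right 0))"
proof (rule exI[of _ Delta], intro conjI allI impI)
  show "good_Delta Delta" by (rule good)
  show "continuous_on ({0<..} \<times> {0<..}) Delta" by (rule cont_Delta)
  fix D' and t x :: real assume "good_Delta D'" "0 < t \<and> 0 < x"
  then show "D' (t, x) = Delta (t, x)" using uniq by blast
next
  fix to xo xo' po po'
  assume "0 < to \<and> Delta (to, xo) = (0, po) \<and> Delta (to, xo') = (0, po') \<and> 0 < xo \<and> xo < xo' \<and> xo' < qsharp to"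
  then show "po < po'" using part2[of to xo po xo' po'] by blast
next
  fix x :: real assume "0 < x"
  then show "((\<lambda>t. Delta (t, x)) \<longlongrightarrow> (x, 2)) (at_right 0)" by (rule lim_Delta)
qed


end
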